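(* For every $\phi \in L^1(\mathbb{R}_+)$, $f \in L^{\infty}(\mathbb{R}_+)$ and $\omega \in \Omega^*$, \[(U_{\phi}^*f)_{\omega}(x) = \int_{-\infty}^{\infty} f_{\omega}(x+t)\tilde{\phi}(t)\,dt = (f_{\omega} * \phi^* )(x)\quad\text{for every } x\in\mathbb{R},\] where $\tilde\phi$ equals $\phi$ on $[0,\infty)$ and $0$ on $(-\infty,0)$, and $\phi^*(x) = 0$ for $x\ge 0$, $\phi^*(x) = \phi(-x)$ for $x<0$.
   Context: $\mathbb{R}_+=[0,\infty)$; functions are complex-valued. $(U^*_\phi f)(x) = \int_x^\infty f(t)\phi(t-x)\,dt$. Convolution: $(g*h)(x) = \int_{-\infty}^\infty g(x-t)h(t)\,dt$. Let $\beta\mathbb{N}$ be the Stone–Čech compactification of $\mathbb{N}$, $\mathbb{N}^* = \beta\mathbb{N}\setminus\mathbb{N}$, $\tau$ the continuous extension of $n\mapsto n+1$. $\Omega$ is the quotient of $\beta\mathbb{N}\times[0,1]$ identifying $(\eta,1)$ with $(\tau\eta,0)$; $\Omega^*$ consists of classes $(\eta,u)$ with $\eta\in\mathbb{N}^*$; $\tau^s(\eta,u) = (\tau^{[u+s]}\eta, u+s-[u+s])$. Each $\omega=(\eta,u)$ is identified with the ultrafilter on $\mathbb{R}_+$ generated by $\{u+A: A\in\eta\}$. For $g\in L^\infty(\mathbb{R}_+)$, $g_\omega := \omega\text{-}\lim_s g(\cdot+s)$ in the weak* topology of $L^\infty(\mathbb{R}_+)$, extended to $L^\infty(\mathbb{R})$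 by $g_\omega(x) = g_{\tau^{-N}\omega}(N+x)$ for $x\in[-N,0]$. *)

theory Defs
  imports "HOL-Analysis.Analysis"
begin

definition Linf_on :: "real set \<Rightarrow> (real \<Rightarrow> complex) set" where
  "Linf_on S = {h. h \<in> borel_measurable lborel \<and>
      (\<exists>C. AE x in lborel. x \<in> S \<longrightarrow> norm (h x) \<le> C)}"

text \<open>Points of the Stone-Cech compactification of N are the ultrafilters on N.\<close>
definition nat_ultrafilter :: "nat filter \<Rightarrow> bool" where
  "nat_ultrafilter F \<longleftrightarrow> F \<noteq> bot \<and>
     (\<forall>P. eventually P F \<or> eventually (\<lambda>n. \<not> P n) F)"

text \<open>N* = beta N minus N: the non-principal ultrafilters.\<close>
definition Nstar :: "nat filter set" where
  "Nstar = {F. nat_ultrafilter F \<and> (\<forall>n. F \<noteq> principal {n})}"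

text \<open>tau: continuous extension of n |-> n+1 (image ultrafilter).\<close>
definition tau :: "nat filter \<Rightarrow> nat filter" where
  "tau F = filtermap Suc F"

text \<open>tau^(-N) on N* (tau is a bijection of N*).\<close>
definition tau_inv :: "nat \<Rightarrow> nat filter \<Rightarrow> nat filter" where
  "tau_inv N \<eta> = (THE \<eta>'. \<eta>' \<in> Nstar \<and> (tau ^^ N) \<eta>' = \<eta>)"

text \<open>The point omega = (eta,u) of Omega, viewed as the ultrafilter on R+ generated by
  the sets u + A, A in eta.\<close>
definition omega_filter :: "nat filter \<Rightarrow> real \<Rightarrow> real filter" where
  "omega_filter \<eta> u = filtermap (\<lambda>n. u + real n) \<eta>"

text \<open>weak-star limit along the filter F of the family s |-> G s in L-infinity(R+) = L1(R+)';
  a representative is chosen (it is unique almost everywhere on R+).\<close>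
definition wstar_lim :: "real filter \<Rightarrow> (real \<Rightarrow> real \<Rightarrow> complex) \<Rightarrow> (real \<Rightarrow> complex)" where
  "wstar_lim F G = (SOME h. h \<in> Linf_on {0..} \<and>
     (\<forall>\<psi>::real \<Rightarrow> complex. set_integrable lborel {0..} \<psi> \<longrightarrow>
        ((\<lambda>s. set_lebesgue_integral lborel {0..} (\<lambda>x. G s x * \<psi> x))
           \<longlongrightarrow> set_lebesgue_integral lborel {0..} (\<lambda>x. h x * \<psi> x)) F))"

definition g_omega_pos :: "(real \<Rightarrow> complex) \<Rightarrow> nat filter \<Rightarrow> real \<Rightarrow> real \<Rightarrow> complex" where
  "g_omega_pos g \<eta> u = wstar_lim (omega_filter \<eta> u) (\<lambda>s x. g (x + s))"

text \<open>Extension to R: g_omega(x) = g_{tau^(-N) omega}(N + x) for x in [-N,0];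
  here tau^(-N) (eta,u) = (tau^(-N) eta, u) and we take N = ceiling(-x).\<close>
definition g_omega :: "(real \<Rightarrow> complex) \<Rightarrow> nat filter \<Rightarrow> real \<Rightarrow> real \<Rightarrow> complex" where
  "g_omega g \<eta> u x =
     (if 0 \<le> x then g_omega_pos g \<eta> u x
      else (let N = nat \<lceil>- x\<rceil> in g_omega_pos g (tau_inv N \<eta>) u (real N + x)))"

definition Ustar :: "(real \<Rightarrow> complex) \<Rightarrow> (real \<Rightarrow> complex) \<Rightarrow> real \<Rightarrow> complex" where
  "Ustar \<phi> f x = set_lebesgue_integral lborel {x..} (\<lambda>t. f t * \<phi> (t - x))"

definition conv :: "(real \<Rightarrow> complex) \<Rightarrow> (real \<Rightarrow> complex) \<Rightarrow> real \<Rightarrow> complex" where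
  "conv g h x = integral\<^sup>L lborel (\<lambda>t. g (x - t) * h t)"

definition phi_tilde :: "(real \<Rightarrow> complex) \<Rightarrow> real \<Rightarrow> complex" where
  "phi_tilde \<phi> t = (if 0 \<le> t then \<phi> t else 0)"

definition phi_star :: "(real \<Rightarrow> complex) \<Rightarrow> real \<Rightarrow> complex" where
  "phi_star \<phi> t = (if 0 \<le> t then 0 else \<phi> (- t))"

end

theory Submission
  imports Defs "HOL-Analysis.Radon_Nikodym"
begin


lemma tau_pow: "(tau ^^ k) F = filtermap (\<lambda>n. n + k) F"
  by (induction k) (auto simp: tau_def filtermap_filtermap filtermap_ident[unfolded id_def])

lemma filtermap_inj_eq:
  assumes "inj g" "filtermap g F1 = filtermap g F2" shows "F1 = F2"
proof (rule filter_eqI)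
  fix P
  have "eventually P F1 \<longleftrightarrow> eventually (\<lambda>y. P (inv g y)) (filtermap g F1)"
    using assms(1) by (simp add: eventually_filtermap)
  also have "\<dots> \<longleftrightarrow> eventually P F2"
    using assms by (simp add: eventually_filtermap)
  finally show "eventually P F1 \<longleftrightarrow> eventually P F2" .
qed

lemma Nstar_neq:
  assumes "F \<in> Nstar" shows "eventually (\<lambda>n. n \<noteq> m) F"
proof (rule ccontr)
  assume nev: "\<not> eventually (\<lambda>n. n \<noteq> m) F"
  have uf: "nat_ultrafilter F" and np: "F \<noteq> principal {m}" using assms by (auto simp: Nstar_def)
  hence ev: "eventually (\<lambda>n. n = m) F" using nev unfolding nat_ultrafilter_def by force
  have "F = principal {m}"
  proof (rule filter_eqI)
    fix P
    show "eventually P F \<longleftrightarrow> eventually P (principal {m})"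
    proof
      assume "eventually P F"
      with ev have "eventually (\<lambda>n. n = m \<and> P n) F" by (rule eventually_conj)
      hence "P m \<or> F = bot"
      proof (cases "P m")
        case False
        assume "eventually (\<lambda>n. n = m \<and> P n) F"
        hence "eventually (\<lambda>_. False) F" by (rule eventually_mono) (use False in blast)
        thus ?thesis by (metis eventually_False)
      qed simp
      thus "eventually P (principal {m})" using uf by (auto simp: nat_ultrafilter_def eventually_principal)
    next
      assume "eventually P (principal {m})"
      hence "P m" by (simp add: eventually_principal)
      thus "eventually P F" using ev by (auto elim: eventually_mono)
    qed
  qed
  with np show False by simp
qed

lemma Nstar_ge:
  assumes "F \<in> Nstar" shows "eventually (\<lambda>n. k \<le> n) F"
proof -
  have "eventually (\<lambda>n. \<forall>m\<in>{..<k}. n \<noteq> m) F"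
    by (rule eventually_ball_finite) (auto intro: Nstar_neq[OF assms])
  thus ?thesis by (rule eventually_mono) (auto simp: not_less[symmetric])
qed

lemma Nstar_I:
  assumes "nat_ultrafilter F" "\<And>m. eventually (\<lambda>n. n \<noteq> m) F" shows "F \<in> Nstar"
  unfolding Nstar_def
proof (intro CollectI conjI allI notI)
  fix n assume "F = principal {n}"
  with assms(2)[of n] show False by (simp add: eventually_principal)
qed (use assms in auto)

lemma nat_ultrafilter_map:
  assumes "nat_ultrafilter F" shows "nat_ultrafilter (filtermap g F)"
  using assms unfolding nat_ultrafilter_def by (auto simp: eventually_filtermap filtermap_bot_iff)

lemma Nstar_map:
  assumes "F \<in> Nstar" "\<And>n. n \<ge> m0 \<Longrightarrow> g n \<ge> n - m0" shows "filtermap g F \<in> Nstar"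
proof (rule Nstar_I)
  show "nat_ultrafilter (filtermap g F)" using assms by (auto simp: Nstar_def intro: nat_ultrafilter_map)
  fix m
  show "eventually (\<lambda>n. n \<noteq> m) (filtermap g F)"
    unfolding eventually_filtermap
    using Nstar_ge[OF assms(1), of "m + m0 + 1"]
  proof (rule eventually_mono)
    fix x assume x: "m + m0 + 1 \<le> x"
    hence "g x \<ge> x - m0" using assms(2)[of x] by simp
    thus "g x \<noteq> m" using x by arith
  qed
qed

lemma tau_inv_props:
  assumes "\<eta> \<in> Nstar"
  shows "tau_inv N \<eta> \<in> Nstar" "(tau ^^ N) (tau_inv N \<eta>) = \<eta>"
proof -
  define \<eta>' where "\<eta>' = filtermap (\<lambda>n. n - N) \<eta>"
  have s: "\<eta>' \<in> Nstar" unfolding \<eta>'_def by (rule Nstar_map[OF assms, of N]) auto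
  have "(tau ^^ N) \<eta>' = filtermap (\<lambda>n. n - N + N) \<eta>"
    by (simp add: tau_pow \<eta>'_def filtermap_filtermap)
  also have "\<dots> = filtermap (\<lambda>n. n) \<eta>"
  proof (rule filter_eqI)
    fix P show "eventually P (filtermap (\<lambda>n. n - N + N) \<eta>) = eventually P (filtermap (\<lambda>n. n) \<eta>)"
      unfolding eventually_filtermap
    proof
      assume "\<forall>\<^sub>F x in \<eta>. P (x - N + N)"
      thus "eventually P \<eta>" using Nstar_ge[OF assms, of N] by (rule eventually_elim2) simp
    next
      assume "\<forall>\<^sub>F x in \<eta>. P x"
      thus "\<forall>\<^sub>F x in \<eta>. P (x - N + N)" using Nstar_ge[OF assms, of N] by (rule eventually_elim2) simp
    qed
  qed
  finally have e: "(tau ^^ N) \<eta>' = \<eta>" by (simp add: filtermap_ident[unfolded id_def])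
  have u: "\<And>x. x \<in> Nstar \<and> (tau ^^ N) x = \<eta> \<Longrightarrow> x = \<eta>'"
  proof -
    fix x assume "x \<in> Nstar \<and> (tau ^^ N) x = \<eta>"
    hence "filtermap (\<lambda>n. n + N) x = filtermap (\<lambda>n. n + N) \<eta>'" using e by (simp add: tau_pow)
    thus "x = \<eta>'" by (rule filtermap_inj_eq[rotated]) (auto simp: inj_def)
  qed
  have "tau_inv N \<eta> = \<eta>'" unfolding tau_inv_def
  proof (rule the_equality)
    show "\<eta>' \<in> Nstar \<and> (tau ^^ N) \<eta>' = \<eta>" using s e by simp
  next
    fix x assume "x \<in> Nstar \<and> (tau ^^ N) x = \<eta>"
    thus "x = \<eta>'" by (rule u)
  qed
  thus "tau_inv N \<eta> \<in> Nstar" "(tau ^^ N) (tau_inv N \<eta>) = \<eta>" using s e by auto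
qed

lemma tau_inv_rel:
  assumes "\<eta> \<in> Nstar" "M \<le> N"
  shows "(tau ^^ (N - M)) (tau_inv N \<eta>) = tau_inv M \<eta>"
proof -
  let ?x = "(tau ^^ (N - M)) (tau_inv N \<eta>)"
  have x: "?x \<in> Nstar" unfolding tau_pow
    by (rule Nstar_map[OF tau_inv_props(1)[OF assms(1)], of 0]) auto
  have "(tau ^^ M) ?x = (tau ^^ N) (tau_inv N \<eta>)"
    by (metis assms(2) funpow_add le_add_diff_inverse o_apply)
  hence "(tau ^^ M) ?x = \<eta>" using tau_inv_props(2)[OF assms(1)] by simp
  hence "filtermap (\<lambda>n. n + M) ?x = filtermap (\<lambda>n. n + M) (tau_inv M \<eta>)"
    using tau_inv_props(2)[OF assms(1), of M] by (simp add: tau_pow)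
  thus ?thesis by (rule filtermap_inj_eq[rotated]) (auto simp: inj_def)
qed

definition rult :: "'a filter \<Rightarrow> bool" where
  "rult F \<longleftrightarrow> F \<noteq> bot \<and> (\<forall>P. eventually P F \<or> eventually (\<lambda>x. \<not> P x) F)"

lemma rult_map: "nat_ultrafilter F \<Longrightarrow> rult (filtermap g F)"
  unfolding rult_def nat_ultrafilter_def by (auto simp: eventually_filtermap filtermap_bot_iff)

lemma rult_map': "rult F \<Longrightarrow> rult (filtermap g F)"
  unfolding rult_def by (auto simp: eventually_filtermap filtermap_bot_iff)

lemma rult_lim:
  fixes f :: "'a \<Rightarrow> 'b::metric_space"
  assumes "rult F" "compact K" "eventually (\<lambda>s. f s \<in> K) F"
  shows "\<exists>l. (f \<longlongrightarrow> l) F"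
proof -
  let ?G = "filtermap f F"
  have G: "rult ?G" by (rule rult_map'[OF assms(1)])
  have "?G \<noteq> bot" "eventually (\<lambda>x. x \<in> K) ?G" using G assms(3) by (auto simp: rult_def eventually_filtermap)
  then obtain l where l: "inf (nhds l) ?G \<noteq> bot" using assms(2) unfolding compact_filter by blast
  have "(f \<longlongrightarrow> l) F" unfolding tendsto_def
  proof (intro allI impI)
    fix S :: "'b set" assume S: "open S" "l \<in> S"
    show "eventually (\<lambda>x. f x \<in> S) F"
    proof (rule ccontr)
      assume "\<not> eventually (\<lambda>x. f x \<in> S) F"
      hence "eventually (\<lambda>y. y \<notin> S) ?G" using G by (auto simp: rult_def eventually_filtermap)
      moreover have "eventually (\<lambda>y. y \<in> S) (nhds l)" using S by (rule eventually_nhds_in_open)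
      ultimately have "eventually (\<lambda>_. False) (inf (nhds l) ?G)"
        unfolding eventually_inf by blast
      with l show False by (simp add: eventually_False)
    qed
  qed
  thus ?thesis by blast
qed

lemma omega_filter_rult: "\<eta> \<in> Nstar \<Longrightarrow> rult (omega_filter \<eta> u)"
  unfolding omega_filter_def Nstar_def by (auto intro: rult_map)

lemma omega_filter_nonneg: "u \<ge> 0 \<Longrightarrow> eventually (\<lambda>s. 0 \<le> s) (omega_filter \<eta> u)"
  unfolding omega_filter_def eventually_filtermap by simp

lemma omega_filter_shift:
  "filtermap (\<lambda>s. real k + s) (omega_filter \<eta> u) = omega_filter ((tau ^^ k) \<eta>) u"
  unfolding omega_filter_def tau_pow filtermap_filtermap by (simp add: algebra_simps)



lemma integral_minus_point:
  fixes A :: "real \<Rightarrow> complex"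
  shows "integral\<^sup>L lborel (\<lambda>t. A t - indicator {a} t *\<^sub>R c) = integral\<^sup>L lborel A"
proof (cases "integrable lborel A")
  case True
  have i: "integrable lborel (\<lambda>t. indicator {a} t *\<^sub>R c)" by (intro integrable_scaleR_left) auto
  show ?thesis using True i by (simp add: Bochner_Integration.integral_diff)
next
  case False
  have i: "integrable lborel (\<lambda>t. indicator {a} t *\<^sub>R c)" by (intro integrable_scaleR_left) auto
  have "\<not> integrable lborel (\<lambda>t. A t - indicator {a} t *\<^sub>R c)"
  proof
    assume "integrable lborel (\<lambda>t. A t - indicator {a} t *\<^sub>R c)"
    from Bochner_Integration.integrable_add[OF this i] have "integrable lborel A" by simp
    with False show False by simp
  qed
  with False show ?thesis by (simp add: not_integrable_integral_eq)
qed

lemma conj2: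
  fixes g \<phi> :: "real \<Rightarrow> complex"
  shows "integral\<^sup>L lborel (\<lambda>t. g (x + t) * phi_tilde \<phi> t) = conv g (phi_star \<phi>) x"
proof -
  have "conv g (phi_star \<phi>) x = integral\<^sup>L lborel (\<lambda>t. g (x - t) * phi_star \<phi> t)"
    by (simp add: conv_def)
  also have "\<dots> = integral\<^sup>L lborel (\<lambda>t. g (x + t) * phi_star \<phi> (- t))"
    by (subst lborel_integral_real_affine[where c="-1" and t=0]) auto
  also have "\<dots> = integral\<^sup>L lborel (\<lambda>t. g (x + t) * phi_tilde \<phi> t - indicator {0} t *\<^sub>R (g (x + 0) * phi_tilde \<phi> 0))"
    by (intro Bochner_Integration.integral_cong) (auto simp: phi_star_def phi_tilde_def indicator_def)
  also have "\<dots> = integral\<^sup>L lborel (\<lambda>t. g (x + t) * phi_tilde \<phi> t)"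
    by (rule integral_minus_point)
  finally show ?thesis by simp
qed



lemma fin_interval: "emeasure lborel (B \<inter> {-real n..real n}) < \<infinity>"
  by (rule le_less_trans[OF emeasure_mono[of _ "{-real n..real n}"]]) auto

lemma AE_le_of_setint:
  fixes k :: "real \<Rightarrow> real"
  assumes k[measurable]: "k \<in> borel_measurable lborel"
  and H: "\<And>A. A \<in> sets lborel \<Longrightarrow> emeasure lborel A < \<infinity> \<Longrightarrow>
      set_integrable lborel A k \<and> set_lebesgue_integral lborel A k \<le> C * measure lborel A"
  shows "AE x in lborel. k x \<le> C"
proof -
  define B where "B = {x. C < k x}"
  have B[measurable]: "B \<in> sets lborel" unfolding B_def by measurable
  have "AE x in lborel. x \<notin> B \<inter> {-real n..real n}" for n
  proof -
    define A where "A = B \<inter> {-real n..real n}"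
    have A[measurable]: "A \<in> sets lborel" unfolding A_def by measurable
    have fin: "emeasure lborel A < \<infinity>" unfolding A_def by (rule fin_interval)
    from H[OF A fin] have int: "set_integrable lborel A k"
      and le: "set_lebesgue_integral lborel A k \<le> C * measure lborel A" by auto
    have intC: "integrable lborel (\<lambda>x. indicator A x *\<^sub>R C)"
      using fin A by (intro integrable_scaleR_left integrable_real_indicator) auto
    have intk: "integrable lborel (\<lambda>x. indicator A x *\<^sub>R k x)" using int by (simp add: set_integrable_def)
    define g where "g x = indicator A x *\<^sub>R k x - indicator A x *\<^sub>R C" for x
    have gi: "integrable lborel g" unfolding g_def using intC intk by auto
    have g0: "\<And>x. 0 \<le> g x" unfolding g_def B_def A_def by (auto simp: indicator_def)
    have "integral\<^sup>L lborel g = set_lebesgue_integral lborel A k - C * measure lborel A"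
      unfolding g_def set_lebesgue_integral_def using intC intk fin
      by (simp add: Bochner_Integration.integral_diff mult.commute)
    hence "integral\<^sup>L lborel g \<le> 0" using le by simp
    moreover have "integral\<^sup>L lborel g \<ge> 0" using g0 by (simp add: Bochner_Integration.integral_nonneg)
    ultimately have "integral\<^sup>L lborel g = 0" by simp
    hence "AE x in lborel. g x = 0" using integral_nonneg_eq_0_iff_AE[OF gi] g0 by simp
    thus ?thesis
      by (rule eventually_mono) (auto simp: g_def A_def B_def indicator_def)
  qed
  hence "AE x in lborel. \<forall>n. x \<notin> B \<inter> {-real n..real n}" by (simp add: AE_all_countable)
  thus ?thesis
  proof (rule eventually_mono)
    fix x assume a: "\<forall>n. x \<notin> B \<inter> {-real n..real n}"
    have "x \<in> {-real (nat \<lceil>\<bar>x\<bar>\<rceil>)..real (nat \<lceil>\<bar>x\<bar>\<rceil>)}"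
      by auto (linarith+)
    with a[rule_format, of "nat \<lceil>\<bar>x\<bar>\<rceil>"] show "k x \<le> C" unfolding B_def by (auto simp: not_less)
  qed
qed

lemma RN_core:
  fixes m :: "real set \<Rightarrow> real" and C :: real
  assumes C: "C > 0"
  and bnd: "\<And>A. A \<in> sets lborel \<Longrightarrow> emeasure lborel A < \<infinity> \<Longrightarrow> \<bar>m A\<bar> \<le> C * measure lborel A"
  and add: "\<And>A. range A \<subseteq> sets lborel \<Longrightarrow> disjoint_family A \<Longrightarrow> emeasure lborel (\<Union>i. A i) < \<infinity>
      \<Longrightarrow> (\<lambda>i. m (A i)) sums m (\<Union>i. A i)"
  shows "\<exists>k \<in> borel_measurable lborel. (AE x in lborel. \<bar>k x\<bar> \<le> C) \<and>
     (\<forall>A\<in>sets lborel. emeasure lborel A < \<infinity> \<longrightarrow>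
        set_integrable lborel A k \<and> m A = set_lebesgue_integral lborel A k)"
proof -
  define \<mu> where "\<mu> A = (if emeasure lborel A < \<infinity> then ennreal (m A + 2*C*measure lborel A) else \<infinity>)" for A
  have nonneg: "0 \<le> m A + 2*C*measure lborel A" "C * measure lborel A \<le> m A + 2*C*measure lborel A"
    if "A \<in> sets lborel" "emeasure lborel A < \<infinity>" for A
    using bnd[OF that] C measure_nonneg[of lborel A] by (auto simp: abs_le_iff)
  have geC: "ennreal C * emeasure lborel A \<le> \<mu> A" if "A \<in> sets lborel" for A
  proof cases
    assume f: "emeasure lborel A < \<infinity>"
    hence e: "emeasure lborel A = ennreal (measure lborel A)" by (simp add: emeasure_eq_ennreal_measure)
    show ?thesis using f nonneg[OF that f] C unfolding e
      by (simp add: \<mu>_def ennreal_mult[symmetric] ennreal_leI)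
  qed (simp add: \<mu>_def)
  have ca: "countably_additive (sets borel) \<mu>"
  proof (unfold countably_additive_def, intro allI impI)
    fix A :: "nat \<Rightarrow> real set"
    assume A: "range A \<subseteq> sets borel" "disjoint_family A" "\<Union>(range A) \<in> sets borel"
    show "(\<Sum>i. \<mu> (A i)) = \<mu> (\<Union>(range A))"
    proof cases
      assume f: "emeasure lborel (\<Union>(range A)) < \<infinity>"
      have fi: "emeasure lborel (A i) < \<infinity>" for i
        by (rule le_less_trans[OF emeasure_mono f]) (use A in auto)
      have s: "(\<lambda>i. m (A i) + 2*C*measure lborel (A i)) sums (m (\<Union>(range A)) + 2*C*measure lborel (\<Union>(range A)))"
        by (intro sums_add sums_mult add measure_UNION) (use A f in auto)
      have "(\<Sum>i. \<mu> (A i)) = (\<Sum>i. ennreal (m (A i) + 2*C*measure lborel (A i)))" using fi by (simp add: \<mu>_def)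
      also have "\<dots> = ennreal (\<Sum>i. m (A i) + 2*C*measure lborel (A i))"
        by (rule suminf_ennreal2) (use nonneg fi A s in \<open>auto simp: sums_iff\<close>)
      also have "\<dots> = \<mu> (\<Union>(range A))" using s f by (simp add: \<mu>_def sums_iff)
      finally show ?thesis .
    next
      assume nf: "\<not> emeasure lborel (\<Union>(range A)) < \<infinity>"
      have "ennreal C * emeasure lborel (\<Union>(range A)) = (\<Sum>i. ennreal C * emeasure lborel (A i))"
        using A by (simp add: ennreal_suminf_cmult suminf_emeasure)
      also have "\<dots> \<le> (\<Sum>i. \<mu> (A i))" by (intro suminf_le geC summableI) (use A in auto)
      finally have "(\<Sum>i. \<mu> (A i)) = \<infinity>" using nf C
        by (simp add: top_unique ennreal_mult_top not_less)
      thus ?thesis using nf by (simp add: \<mu>_def)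
    qed
  qed
  define N where "N = measure_of UNIV (sets borel) \<mu>"
  have sa: "sigma_algebra UNIV (sets (borel::real measure))"
    using sets.sigma_algebra_axioms[of "borel::real measure"] by simp
  have m0: "m {} = 0" using bnd[of "{}"] by simp
  have pos: "positive (sets borel) \<mu>" unfolding positive_def \<mu>_def using m0 by simp
  have eN: "emeasure N A = \<mu> A" if "A \<in> sets borel" for A
    unfolding N_def by (rule emeasure_measure_of_sigma[OF sa pos ca that])
  have sN: "sets N = sets lborel"
    unfolding N_def by (simp add: sets_measure_of sigma_algebra.sigma_sets_eq[OF sa])
  have ac: "absolutely_continuous lborel N"
    unfolding absolutely_continuous_def
  proof
    fix A :: "real set" assume "A \<in> null_sets lborel"
    hence A: "A \<in> sets lborel" "emeasure lborel A = 0" by auto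
    hence "m A = 0" using bnd[of A] by (auto simp: measure_def)
    thus "A \<in> null_sets N" using A eN[of A] sN by (auto simp: \<mu>_def measure_def)
  qed
  obtain d where d[measurable]: "d \<in> borel_measurable lborel" and dN: "density lborel d = N"
    using sigma_finite_measure.Radon_Nikodym[OF sigma_finite_lborel ac sN] by blast
  define k where "k x = enn2real (d x) - 2*C" for x
  have km[measurable]: "k \<in> borel_measurable lborel" unfolding k_def by measurable
  have main: "set_integrable lborel A k \<and> m A = set_lebesgue_integral lborel A k"
    if A[measurable]: "A \<in> sets lborel" and fin: "emeasure lborel A < \<infinity>" for A
  proof -
    have key: "(\<integral>\<^sup>+x. d x * indicator A x \<partial>lborel) = ennreal (m A + 2*C*measure lborel A)"
      using emeasure_density[OF d A] dN eN[of A] A fin by (simp add: \<mu>_def)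
    have "AE x in lborel. d x * indicator A x \<noteq> \<infinity>"
      by (rule nn_integral_noteq_infinite) (auto simp: key)
    hence dfin: "AE x in lborel. x \<in> A \<longrightarrow> d x \<noteq> \<infinity>"
      by (rule eventually_mono) (auto simp: indicator_def)
    have cong: "(\<integral>\<^sup>+x. ennreal (indicator A x * enn2real (d x)) \<partial>lborel) = (\<integral>\<^sup>+x. d x * indicator A x \<partial>lborel)"
      by (rule nn_integral_cong_AE) (use dfin in \<open>auto elim!: eventually_mono simp: indicator_def less_top\<close>)
    have int1: "integrable lborel (\<lambda>x. indicator A x * enn2real (d x))"
      by (rule integrableI_bounded) (auto simp: cong key abs_mult)
    have eq1: "(\<integral>x. indicator A x * enn2real (d x) \<partial>lborel) = m A + 2*C*measure lborel A"
      by (subst integral_eq_nn_integral) (auto simp: cong key nonneg[OF A fin])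
    have intA: "integrable lborel (\<lambda>x. indicator A x * (2*C))"
      using fin A by (intro integrable_mult_left integrable_real_indicator) auto
    have r: "(\<lambda>x. indicator A x *\<^sub>R k x) = (\<lambda>x. indicator A x * enn2real (d x) - indicator A x * (2*C))"
      by (auto simp: k_def indicator_def)
    have "set_integrable lborel A k" unfolding set_integrable_def r using int1 intA by auto
    moreover have "set_lebesgue_integral lborel A k = m A"
      unfolding set_lebesgue_integral_def r using int1 intA fin
      by (simp add: Bochner_Integration.integral_diff eq1 measure_def)
    ultimately show ?thesis by simp
  qed
  have up: "AE x in lborel. k x \<le> C"
  proof (rule AE_le_of_setint[OF km])
    fix A :: "real set" assume A: "A \<in> sets lborel" "emeasure lborel A < \<infinity>"
    show "set_integrable lborel A k \<and> set_lebesgue_integral lborel A k \<le> C * measure lborel A"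
      using main[OF A] bnd[OF A] by auto
  qed
  have lo: "AE x in lborel. - k x \<le> C"
  proof (rule AE_le_of_setint)
    fix A :: "real set" assume A: "A \<in> sets lborel" "emeasure lborel A < \<infinity>"
    have "set_integrable lborel A (\<lambda>x. - k x)" using main[OF A]
      by (simp add: set_integrable_def)
    moreover have "set_lebesgue_integral lborel A (\<lambda>x. - k x) = - set_lebesgue_integral lborel A k"
      by (simp add: set_lebesgue_integral_def)
    ultimately show "set_integrable lborel A (\<lambda>x. - k x) \<and> set_lebesgue_integral lborel A (\<lambda>x. - k x) \<le> C * measure lborel A"
      using main[OF A] bnd[OF A] by auto
  qed simp
  have "AE x in lborel. \<bar>k x\<bar> \<le> C" using up lo by eventually_elim auto
  thus ?thesis using km main by blast
qed



lemma integrable_bdd_mult: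
  fixes h f :: "real \<Rightarrow> complex"
  assumes h[measurable]: "h \<in> borel_measurable lborel" and hb: "AE x in lborel. norm (h x) \<le> B"
    and f: "integrable lborel f"
  shows "integrable lborel (\<lambda>x. h x * f x)"
proof (rule Bochner_Integration.integrable_bound[of _ "\<lambda>x. of_real B * f x"])
  show "integrable lborel (\<lambda>x. of_real B * f x)" using f by simp
  show "(\<lambda>x. h x * f x) \<in> borel_measurable lborel" using f[THEN borel_measurable_integrable] by measurable
  show "AE x in lborel. norm (h x * f x) \<le> norm (of_real B * f x)"
    using hb
  proof (rule eventually_mono)
    fix x assume "norm (h x) \<le> B"
    hence "norm (h x) * norm (f x) \<le> \<bar>B\<bar> * norm (f x)" by (intro mult_right_mono) auto
    thus "norm (h x * f x) \<le> norm (complex_of_real B * f x)" by (simp add: norm_mult)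
  qed
qed

lemma riesz_L1:
  fixes L :: "(real \<Rightarrow> complex) \<Rightarrow> complex" and C :: real
  assumes ladd: "\<And>f g. integrable lborel f \<Longrightarrow> integrable lborel g \<Longrightarrow> L (\<lambda>x. f x + g x) = L f + L g"
    and lmult: "\<And>c f. integrable lborel f \<Longrightarrow> L (\<lambda>x. c * f x) = c * L f"
    and lbnd: "\<And>f. integrable lborel f \<Longrightarrow> norm (L f) \<le> C * (\<integral>x. norm (f x) \<partial>lborel)"
  shows "\<exists>h \<in> borel_measurable lborel. (\<exists>B. AE x in lborel. norm (h x) \<le> B) \<and>
          (\<forall>f. integrable lborel f \<longrightarrow> L f = (\<integral>x. h x * f x \<partial>lborel))"
proof -
  define C' where "C' = max C 1"
  have C': "C' > 0" unfolding C'_def by simp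
  have bnd: "norm (L f) \<le> C' * (\<integral>x. norm (f x) \<partial>lborel)" if "integrable lborel f" for f
  proof -
    have "C * (\<integral>x. norm (f x) \<partial>lborel) \<le> C' * (\<integral>x. norm (f x) \<partial>lborel)"
      unfolding C'_def by (intro mult_right_mono) auto
    thus ?thesis using lbnd[OF that] by simp
  qed
  have ldiff: "L (\<lambda>x. f x - g x) = L f - L g" if "integrable lborel f" "integrable lborel g" for f g
  proof -
    have "L (\<lambda>x. f x - g x) = L (\<lambda>x. f x + (-1) * g x)" by simp
    also have "\<dots> = L f + L (\<lambda>x. (-1) * g x)" by (rule ladd) (use that in auto)
    also have "L (\<lambda>x. (-1) * g x) = - L g" using lmult[OF that(2), of "-1"] by simp
    finally show ?thesis by simp
  qed
  define I where "I A = (\<lambda>x. indicator A x :: complex)" for A :: "real set"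
  have intI: "integrable lborel (I A)" if "A \<in> sets lborel" "emeasure lborel A < \<infinity>" for A
  proof -
    have "integrable lborel (\<lambda>x. indicator A x *\<^sub>R (1::complex))"
      using that by (intro integrable_scaleR_left integrable_real_indicator) auto
    moreover have "(\<lambda>x. indicator A x *\<^sub>R (1::complex)) = I A" by (auto simp: I_def indicator_def)
    ultimately show ?thesis by simp
  qed
  have L0: "L (\<lambda>x. 0) = 0" using lmult[of "\<lambda>x. 0" 0] by simp
  have normI: "(\<integral>x. norm (I A x) \<partial>lborel) = measure lborel A" for A
  proof -
    have "(\<lambda>x. norm (I A x)) = indicator A" by (auto simp: I_def indicator_def)
    thus ?thesis by simp
  qed
  have csum: "(\<lambda>i. L (I (A i))) sums L (I (\<Union>i. A i))"
    if A: "range A \<subseteq> sets lborel" "disjoint_family A" "emeasure lborel (\<Union>i. A i) < \<infinity>" for A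
  proof -
    define U where "U = (\<Union>i. A i)"
    define B where "B n = (\<Union>i<n. A i)" for n
    have Us: "U \<in> sets lborel" using A unfolding U_def by auto
    have Bs: "B n \<in> sets lborel" for n using A unfolding B_def by auto
    have BU: "B n \<subseteq> U" for n unfolding B_def U_def by auto
    have Uf: "emeasure lborel U < \<infinity>" using A unfolding U_def by simp
    have Bf: "emeasure lborel (B n) < \<infinity>" for n
      by (rule le_less_trans[OF emeasure_mono[OF BU Us] Uf])
    have Af: "emeasure lborel (A n) < \<infinity>" for n
      by (rule le_less_trans[OF emeasure_mono Uf]) (use Us in \<open>auto simp: U_def\<close>)
    have As: "A n \<in> sets lborel" for n using A by auto
    have ps: "(\<Sum>i<n. L (I (A i))) = L (I (B n))" for n
    proof (induction n)
      case 0
      have "I (B 0) = (\<lambda>x. 0)" by (auto simp: I_def B_def)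
      thus ?case using L0 by simp
    next
      case (Suc n)
      have "A i \<inter> A n = {}" if "i < n" for i using A(2) that unfolding disjoint_family_on_def by auto
      hence disj: "A n \<inter> B n = {}" unfolding B_def by auto
      have "I (B (Suc n)) = (\<lambda>x. I (B n) x + I (A n) x)"
      proof
        fix x show "I (B (Suc n)) x = I (B n) x + I (A n) x"
          using disj by (cases "x \<in> A n") (auto simp: I_def B_def indicator_def lessThan_Suc)
      qed
      hence "L (I (B (Suc n))) = L (I (B n)) + L (I (A n))"
        using ladd[OF intI[OF Bs Bf] intI[OF As Af]] by simp
      thus ?case using Suc by simp
    qed
    have BU': "(\<Union>n. B n) = U" unfolding B_def U_def by auto
    have mB: "(\<lambda>n. measure lborel (B n)) \<longlonglongrightarrow> measure lborel U"
    proof -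
      have "(\<lambda>n. measure lborel (B n)) \<longlonglongrightarrow> measure lborel (\<Union>n. B n)"
      proof (rule Lim_measure_incseq)
        show "incseq B" unfolding incseq_def B_def by (intro allI impI UN_mono) auto
      qed (use Bs Uf BU' in auto)
      thus ?thesis using BU' by simp
    qed
    have nb: "norm (L (I U) - L (I (B n))) \<le> C' * (measure lborel U - measure lborel (B n))" for n
    proof -
      have "L (I U) - L (I (B n)) = L (\<lambda>x. I U x - I (B n) x)"
        using ldiff[OF intI[OF Us Uf] intI[OF Bs Bf]] by simp
      also have "(\<lambda>x. I U x - I (B n) x) = I (U - B n)"
      proof
        fix x show "I U x - I (B n) x = I (U - B n) x"
          using BU[of n] by (cases "x \<in> B n") (auto simp: I_def indicator_def)
      qed
      finally have e: "L (I U) - L (I (B n)) = L (I (U - B n))" .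
      have "measure lborel (U - B n) = measure lborel U - measure lborel (B n)"
        using Uf Us Bs BU by (intro measure_Diff) auto
      moreover have "integrable lborel (I (U - B n))"
        by (rule intI) (use Us Bs Uf emeasure_mono[of "U - B n" U lborel] in auto)
      ultimately show ?thesis unfolding e using bnd[of "I (U - B n)"] normI by simp
    qed
    have "(\<lambda>n. L (I U) - L (I (B n))) \<longlonglongrightarrow> 0"
    proof (rule Lim_null_comparison)
      show "\<forall>\<^sub>F n in sequentially. norm (L (I U) - L (I (B n))) \<le> C' * (measure lborel U - measure lborel (B n))"
        using nb by simp
      show "(\<lambda>n. C' * (measure lborel U - measure lborel (B n))) \<longlonglongrightarrow> 0"
      proof -
        have "(\<lambda>n. C' * (measure lborel U - measure lborel (B n))) \<longlonglongrightarrow> C' * (measure lborel U - measure lborel U)"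
          by (intro tendsto_intros mB)
        thus ?thesis by simp
      qed
    qed
    hence "(\<lambda>n. L (I U) - (L (I U) - L (I (B n)))) \<longlonglongrightarrow> L (I U) - 0"
      by (intro tendsto_diff tendsto_const)
    hence "(\<lambda>n. L (I (B n))) \<longlonglongrightarrow> L (I U)" by simp
    thus ?thesis unfolding sums_def ps U_def .
  qed
  have bndI: "norm (L (I A)) \<le> C' * measure lborel A"
    if "A \<in> sets lborel" "emeasure lborel A < \<infinity>" for A
    using bnd[OF intI[OF that]] normI by simp
  obtain kr where kr[measurable]: "kr \<in> borel_measurable lborel" and krb: "AE x in lborel. \<bar>kr x\<bar> \<le> C'"
    and krA: "\<And>A. A \<in> sets lborel \<Longrightarrow> emeasure lborel A < \<infinity> \<Longrightarrow>
        set_integrable lborel A kr \<and> Re (L (I A)) = set_lebesgue_integral lborel A kr"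
  proof -
    have "\<exists>k \<in> borel_measurable lborel. (AE x in lborel. \<bar>k x\<bar> \<le> C') \<and>
     (\<forall>A\<in>sets lborel. emeasure lborel A < \<infinity> \<longrightarrow>
        set_integrable lborel A k \<and> Re (L (I A)) = set_lebesgue_integral lborel A k)"
    proof (rule RN_core[OF C'])
      fix A :: "real set" assume "A \<in> sets lborel" "emeasure lborel A < \<infinity>"
      thus "\<bar>Re (L (I A))\<bar> \<le> C' * measure lborel A" using bndI abs_Re_le_cmod order_trans by blast
    next
      fix A :: "nat \<Rightarrow> real set"
      assume "range A \<subseteq> sets lborel" "disjoint_family A" "emeasure lborel (\<Union>i. A i) < \<infinity>"
      thus "(\<lambda>i. Re (L (I (A i)))) sums Re (L (I (\<Union>i. A i)))" by (intro sums_Re csum)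
    qed
    thus ?thesis using that by blast
  qed
  obtain ki where ki[measurable]: "ki \<in> borel_measurable lborel" and kib: "AE x in lborel. \<bar>ki x\<bar> \<le> C'"
    and kiA: "\<And>A. A \<in> sets lborel \<Longrightarrow> emeasure lborel A < \<infinity> \<Longrightarrow>
        set_integrable lborel A ki \<and> Im (L (I A)) = set_lebesgue_integral lborel A ki"
  proof -
    have "\<exists>k \<in> borel_measurable lborel. (AE x in lborel. \<bar>k x\<bar> \<le> C') \<and>
     (\<forall>A\<in>sets lborel. emeasure lborel A < \<infinity> \<longrightarrow>
        set_integrable lborel A k \<and> Im (L (I A)) = set_lebesgue_integral lborel A k)"
    proof (rule RN_core[OF C'])
      fix A :: "real set" assume "A \<in> sets lborel" "emeasure lborel A < \<infinity>"
      thus "\<bar>Im (L (I A))\<bar> \<le> C' * measure lborel A" using bndI abs_Im_le_cmod order_trans by blast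
    next
      fix A :: "nat \<Rightarrow> real set"
      assume "range A \<subseteq> sets lborel" "disjoint_family A" "emeasure lborel (\<Union>i. A i) < \<infinity>"
      thus "(\<lambda>i. Im (L (I (A i)))) sums Im (L (I (\<Union>i. A i)))" by (intro sums_Im csum)
    qed
    thus ?thesis using that by blast
  qed
  define h where "h x = complex_of_real (kr x) + \<i> * complex_of_real (ki x)" for x
  have hm[measurable]: "h \<in> borel_measurable lborel" unfolding h_def by measurable
  have hb: "AE x in lborel. norm (h x) \<le> 2 * C'"
    using krb kib
  proof eventually_elim
    case (elim x)
    have "norm (h x) \<le> norm (complex_of_real (kr x)) + norm (\<i> * complex_of_real (ki x))"
      unfolding h_def by (rule norm_triangle_ineq)
    also have "\<dots> = \<bar>kr x\<bar> + \<bar>ki x\<bar>" by (simp add: norm_mult)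
    finally show ?case using elim by simp
  qed
  have hI: "L (I A) = (\<integral>x. h x * I A x \<partial>lborel)"
    if A: "A \<in> sets lborel" "emeasure lborel A < \<infinity>" for A
  proof -
    have i1: "integrable lborel (\<lambda>x. indicator A x *\<^sub>R kr x)" using krA[OF A] by (simp add: set_integrable_def)
    have i2: "integrable lborel (\<lambda>x. indicator A x *\<^sub>R ki x)" using kiA[OF A] by (simp add: set_integrable_def)
    have e: "(\<lambda>x. h x * I A x) = (\<lambda>x. complex_of_real (indicator A x *\<^sub>R kr x) + \<i> * complex_of_real (indicator A x *\<^sub>R ki x))"
      by (auto simp: h_def I_def indicator_def)
    have "(\<integral>x. h x * I A x \<partial>lborel) = complex_of_real (\<integral>x. indicator A x *\<^sub>R kr x \<partial>lborel) + \<i> * complex_of_real (\<integral>x. indicator A x *\<^sub>R ki x \<partial>lborel)"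
    proof -
      define a where "a x = complex_of_real (indicator A x *\<^sub>R kr x)" for x
      define b where "b x = complex_of_real (indicator A x *\<^sub>R ki x)" for x
      have ia: "integrable lborel a" unfolding a_def using i1 by (rule integrable_of_real)
      have ib: "integrable lborel b" unfolding b_def using i2 by (rule integrable_of_real)
      have ib': "integrable lborel (\<lambda>x. \<i> * b x)" using ib by (rule integrable_mult_right)
      have "(\<integral>x. h x * I A x \<partial>lborel) = (\<integral>x. a x + \<i> * b x \<partial>lborel)"
        unfolding e a_def b_def ..
      also have "\<dots> = (\<integral>x. a x \<partial>lborel) + (\<integral>x. \<i> * b x \<partial>lborel)"
        by (rule Bochner_Integration.integral_add[OF ia ib'])
      also have "(\<integral>x. \<i> * b x \<partial>lborel) = \<i> * (\<integral>x. b x \<partial>lborel)"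
        by (rule Bochner_Integration.integral_mult_right) (use ib in simp)
      also have "(\<integral>x. a x \<partial>lborel) = complex_of_real (\<integral>x. indicator A x *\<^sub>R kr x \<partial>lborel)"
        unfolding a_def by (rule integral_complex_of_real)
      also have "(\<integral>x. b x \<partial>lborel) = complex_of_real (\<integral>x. indicator A x *\<^sub>R ki x \<partial>lborel)"
        unfolding b_def by (rule integral_complex_of_real)
      finally show ?thesis .
    qed
    also have "\<dots> = complex_of_real (Re (L (I A))) + \<i> * complex_of_real (Im (L (I A)))"
      using krA[OF A] kiA[OF A] by (simp add: set_lebesgue_integral_def)
    also have "\<dots> = L (I A)" by (rule complex_eq[symmetric])
    finally show ?thesis by simp
  qed
  have main: "L f = (\<integral>x. h x * f x \<partial>lborel)" if "integrable lborel f" for f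
    using that
  proof (induction rule: integrable_induct)
    case (base A c)
    have e: "(\<lambda>x. indicator A x *\<^sub>R c) = (\<lambda>x. c * I A x)" by (auto simp: I_def indicator_def)
    have "L (\<lambda>x. c * I A x) = c * (\<integral>x. h x * I A x \<partial>lborel)"
      using lmult[OF intI[OF base]] hI[OF base] by simp
    also have "\<dots> = (\<integral>x. h x * (c * I A x) \<partial>lborel)"
      by (simp add: Bochner_Integration.integral_mult_right[symmetric] ac_simps)
    finally have r: "L (\<lambda>x. c * I A x) = (\<integral>x. h x * (c * I A x) \<partial>lborel)" .
    have e2: "(\<lambda>x. h x * (indicator A x *\<^sub>R c)) = (\<lambda>x. h x * (c * I A x))"
      by (auto simp: I_def indicator_def)
    show ?case unfolding e e2 by (rule r)
  next
    case (add f g)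
    have "L (\<lambda>x. f x + g x) = L f + L g" by (rule ladd[OF add(1,2)])
    also have "\<dots> = (\<integral>x. h x * f x + h x * g x \<partial>lborel)"
      using add integrable_bdd_mult[OF hm hb add(1)] integrable_bdd_mult[OF hm hb add(2)]
      by (simp add: Bochner_Integration.integral_add)
    finally show ?case by (simp add: distrib_left)
  next
    case (lim f s)
    have fm[measurable]: "f \<in> borel_measurable lborel" using lim(4) by (rule borel_measurable_integrable)
    have sm[measurable]: "s i \<in> borel_measurable lborel" for i using lim(1) by (rule borel_measurable_integrable)
    have n0: "(\<lambda>i. \<integral>x. norm (f x - s i x) \<partial>lborel) \<longlonglongrightarrow> (\<integral>x. norm (0::complex) \<partial>(lborel::real measure))"
    proof (rule integral_dominated_convergence[where w="\<lambda>x. 3 * norm (f x)" and s="\<lambda>i x. norm (f x - s i x)" and f="\<lambda>x. norm (0::complex)"])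
      show "integrable lborel (\<lambda>x. 3 * norm (f x))" using lim(4) by simp
      show "AE x in lborel. (\<lambda>i. norm (f x - s i x)) \<longlonglongrightarrow> norm (0::complex)"
      proof (rule AE_I2)
        fix x
        have "(\<lambda>i. f x - s i x) \<longlonglongrightarrow> f x - f x" using lim(2)[of x] by (intro tendsto_diff tendsto_const) auto
        thus "(\<lambda>i. norm (f x - s i x)) \<longlonglongrightarrow> norm (0::complex)" by (intro tendsto_norm) simp
      qed
      show "AE x in lborel. norm (norm (f x - s i x)) \<le> 3 * norm (f x)" for i
      proof -
        have "norm (f x - s i x) \<le> norm (f x) + norm (s i x)" for x by (rule norm_triangle_ineq4)
        moreover have "norm (s i x) \<le> 2 * norm (f x)" for x using lim(3)[of x i] by simp
        ultimately have "norm (f x - s i x) \<le> 3 * norm (f x)" for x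
          by (smt (verit))
        thus ?thesis by simp
      qed
    qed auto
    have t1: "(\<lambda>i. L (s i)) \<longlonglongrightarrow> L f"
    proof -
      have "(\<lambda>i. L f - L (s i)) \<longlonglongrightarrow> 0"
      proof (rule Lim_null_comparison)
        show "\<forall>\<^sub>F i in sequentially. norm (L f - L (s i)) \<le> C' * (\<integral>x. norm (f x - s i x) \<partial>lborel)"
          using bnd[OF Bochner_Integration.integrable_diff[OF lim(4) lim(1)]] ldiff[OF lim(4) lim(1)]
          by simp
        show "(\<lambda>i. C' * (\<integral>x. norm (f x - s i x) \<partial>lborel)) \<longlonglongrightarrow> 0"
          using tendsto_mult_right[OF n0, of C'] by (simp add: mult.commute)
      qed
      hence "(\<lambda>i. L f - (L f - L (s i))) \<longlonglongrightarrow> L f - 0"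
        by (intro tendsto_diff tendsto_const)
      thus ?thesis by simp
    qed
    have t2: "(\<lambda>i. \<integral>x. h x * s i x \<partial>lborel) \<longlonglongrightarrow> (\<integral>x. h x * f x \<partial>lborel)"
    proof (rule integral_dominated_convergence[where w="\<lambda>x. 2 * C' * (2 * norm (f x))"])
      show "integrable lborel (\<lambda>x. 2 * C' * (2 * norm (f x)))" using lim(4) by simp
      show "AE x in lborel. (\<lambda>i. h x * s i x) \<longlonglongrightarrow> h x * f x"
        using lim(2) by (intro AE_I2 tendsto_mult tendsto_const) auto
      show "AE x in lborel. norm (h x * s i x) \<le> 2 * C' * (2 * norm (f x))" for i
        using hb
      proof (rule eventually_mono)
        fix x assume "norm (h x) \<le> 2 * C'"
        thus "norm (h x * s i x) \<le> 2 * C' * (2 * norm (f x))"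
          unfolding norm_mult using lim(3)[of x i] using C' by (intro mult_mono) auto
      qed
    qed auto
    show ?case using LIMSEQ_unique[OF t1] t2 lim(5) by simp
  qed
  show ?thesis using hm hb main by blast
qed

lemma AE_shift:
  fixes s :: real
  assumes "AE y in lborel. P y"
  shows "AE x in lborel. P (x + s)"
proof -
  from assms obtain N where N0: "{y \<in> space lborel. \<not> P y} \<subseteq> N" "emeasure lborel N = 0" "N \<in> sets lborel"
    by (rule AE_E)
  hence N: "N \<in> null_sets lborel" "{y \<in> space lborel. \<not> P y} \<subseteq> N" by auto
  have e: "distr lborel borel ((+) s) = (lborel :: real measure)" by (rule lborel_distr_plus)
  have Ns: "N \<in> sets borel" using N by auto
  have "emeasure lborel ((+) s -` N \<inter> space lborel) = emeasure (distr lborel borel ((+) s)) N"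
    by (rule emeasure_distr[symmetric]) (use Ns in auto)
  also have "\<dots> = 0" unfolding e using N by auto
  moreover have pm: "(\<lambda>x::real. s + x) \<in> borel_measurable borel" by measurable
  have "(+) s -` N \<in> sets borel" using measurable_sets[OF pm Ns] by simp
  ultimately have "(+) s -` N \<inter> space lborel \<in> null_sets lborel"
    by (auto simp: null_sets_def)
  moreover have "{x \<in> space lborel. \<not> P (x + s)} \<subseteq> (+) s -` N \<inter> space lborel"
    using N by (auto simp: add.commute)
  ultimately show ?thesis by (rule AE_I')
qed



definition wprop :: "real filter \<Rightarrow> (real \<Rightarrow> real \<Rightarrow> complex) \<Rightarrow> (real \<Rightarrow> complex) \<Rightarrow> bool" where
  "wprop F G h \<longleftrightarrow> h \<in> Linf_on {0..} \<and>
     (\<forall>\<psi>::real \<Rightarrow> complex. set_integrable lborel {0..} \<psi> \<longrightarrow>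
        ((\<lambda>s. set_lebesgue_integral lborel {0..} (\<lambda>x. G s x * \<psi> x))
           \<longlongrightarrow> set_lebesgue_integral lborel {0..} (\<lambda>x. h x * \<psi> x)) F)"

lemma wstar_lim_spec: "wprop F G h \<Longrightarrow> wprop F G (wstar_lim F G)"
proof -
  assume a: "wprop F G h"
  have e: "wstar_lim F G = (SOME h. wprop F G h)" unfolding wstar_lim_def wprop_def ..
  show ?thesis unfolding e using a by (rule someI[where P="wprop F G"])
qed

lemma Linf_onD:
  assumes "h \<in> Linf_on S"
  shows "h \<in> borel_measurable lborel" "\<exists>C. AE x in lborel. x \<in> S \<longrightarrow> norm (h x) \<le> C"
  using assms by (auto simp: Linf_on_def)

lemma integrable_bdd_on:
  fixes g :: "real \<Rightarrow> 'b::{banach, second_countable_topology}"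
  assumes gm: "g \<in> borel_measurable lborel" and A: "A \<in> sets lborel" "emeasure lborel A < \<infinity>"
    and gb: "AE x in lborel. x \<in> A \<longrightarrow> norm (g x) \<le> B"
  shows "integrable lborel (\<lambda>x. indicator A x *\<^sub>R g x)"
proof (rule Bochner_Integration.integrable_bound[of _ "\<lambda>x. indicator A x *\<^sub>R B"])
  show "integrable lborel (\<lambda>x. indicator A x *\<^sub>R B)"
    using A by (intro integrable_scaleR_left integrable_real_indicator) auto
  show "(\<lambda>x. indicator A x *\<^sub>R g x) \<in> borel_measurable lborel" using gm A by measurable
  show "AE x in lborel. norm (indicator A x *\<^sub>R g x) \<le> norm (indicator A x *\<^sub>R B)"
    using gb by (rule eventually_mono) (auto simp: indicator_def)
qed

lemma norm_mult_bound:
  fixes a b :: complex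
  assumes "norm a \<le> B1" "norm b \<le> B2" shows "norm (a * b) \<le> B1 * B2"
  unfolding norm_mult using assms by (intro mult_mono) (auto intro: order_trans[OF norm_ge_zero])

lemma wstar_unique0:
  fixes h1 h2 :: "real \<Rightarrow> complex"
  assumes h1: "h1 \<in> Linf_on {0..}" and h2: "h2 \<in> Linf_on {0..}"
  and eq: "\<And>\<psi>. set_integrable lborel {0..} \<psi> \<Longrightarrow>
      set_lebesgue_integral lborel {0..} (\<lambda>x. h1 x * \<psi> x) = set_lebesgue_integral lborel {0..} (\<lambda>x. h2 x * \<psi> x)"
  shows "AE x in lborel. 0 \<le> x \<longrightarrow> h1 x = h2 x"
proof -
  have m1[measurable]: "h1 \<in> borel_measurable lborel" and m2[measurable]: "h2 \<in> borel_measurable lborel"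
    using h1 h2 by (auto dest: Linf_onD)
  obtain B1 where B1: "AE x in lborel. x \<in> {0..} \<longrightarrow> norm (h1 x) \<le> B1" using Linf_onD(2)[OF h1] by blast
  obtain B2 where B2: "AE x in lborel. x \<in> {0..} \<longrightarrow> norm (h2 x) \<le> B2" using Linf_onD(2)[OF h2] by blast
  define d where "d x = h1 x - h2 x" for x
  have dm[measurable]: "d \<in> borel_measurable lborel" unfolding d_def by measurable
  have cdm[measurable]: "(\<lambda>x. cnj (d x)) \<in> borel_measurable lborel"
    by (rule borel_measurable_continuous_on[OF _ dm]) (intro continuous_intros)
  have db: "AE x in lborel. x \<in> {0..} \<longrightarrow> norm (d x) \<le> B1 + B2"
    using B1 B2
  proof eventually_elim
    case (elim x)
    thus ?case unfolding d_def using norm_triangle_ineq4[of "h1 x" "h2 x"] by auto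
  qed
  have "AE x in lborel. x \<in> {0..real n} \<longrightarrow> d x = 0" for n :: nat
  proof -
    define A where "A = {0..real n}"
    have A[measurable]: "A \<in> sets lborel" and Af: "emeasure lborel A < \<infinity>" and A0: "A \<subseteq> {0..}"
      unfolding A_def by auto
    define \<psi> where "\<psi> x = indicator A x *\<^sub>R cnj (d x)" for x
    have db': "AE x in lborel. x \<in> A \<longrightarrow> norm (d x) \<le> B1 + B2" using db A0 by (auto elim!: eventually_mono)
    have "integrable lborel (\<lambda>x. indicator A x *\<^sub>R cnj (d x))"
      by (rule integrable_bdd_on[OF _ A Af, of _ "B1 + B2"]) (use db' in auto)
    moreover have "(\<lambda>x. indicator {0..} x *\<^sub>R \<psi> x) = (\<lambda>x. indicator A x *\<^sub>R cnj (d x))"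
      by (rule ext) (use A0 in \<open>auto simp: \<psi>_def indicator_def of_bool_def subset_iff\<close>)
    ultimately have psi: "set_integrable lborel {0..} \<psi>" by (simp add: set_integrable_def)
    have e: "(\<lambda>x. indicator {0..} x *\<^sub>R (h x * \<psi> x)) = (\<lambda>x. indicator A x *\<^sub>R (h x * cnj (d x)))" for h
      by (rule ext) (use A0 in \<open>auto simp: \<psi>_def indicator_def of_bool_def subset_iff\<close>)
    have i1: "integrable lborel (\<lambda>x. indicator A x *\<^sub>R (h1 x * cnj (d x)))"
      by (rule integrable_bdd_on[OF _ A Af, of _ "B1 * (B1 + B2)"])
         (use B1 db' A0 in \<open>auto elim!: eventually_elim2 intro!: norm_mult_bound\<close>)
    have i2: "integrable lborel (\<lambda>x. indicator A x *\<^sub>R (h2 x * cnj (d x)))"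
      by (rule integrable_bdd_on[OF _ A Af, of _ "B2 * (B1 + B2)"])
         (use B2 db' A0 in \<open>auto elim!: eventually_elim2 intro!: norm_mult_bound\<close>)
    have "(\<integral>x. indicator A x *\<^sub>R (h1 x * cnj (d x)) \<partial>lborel) = (\<integral>x. indicator A x *\<^sub>R (h2 x * cnj (d x)) \<partial>lborel)"
      using eq[OF psi] unfolding set_lebesgue_integral_def e .
    hence z0: "(\<integral>x. indicator A x *\<^sub>R (h1 x * cnj (d x)) - indicator A x *\<^sub>R (h2 x * cnj (d x)) \<partial>lborel) = 0"
      using i1 i2 by (simp add: Bochner_Integration.integral_diff)
    have e3: "(\<lambda>x. indicator A x *\<^sub>R (h1 x * cnj (d x)) - indicator A x *\<^sub>R (h2 x * cnj (d x)))
        = (\<lambda>x. complex_of_real (indicator A x * (norm (d x))\<^sup>2))"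
    proof
      fix x show "indicator A x *\<^sub>R (h1 x * cnj (d x)) - indicator A x *\<^sub>R (h2 x * cnj (d x))
        = complex_of_real (indicator A x * (norm (d x))\<^sup>2)"
      proof -
        have "h1 x * cnj (d x) - h2 x * cnj (d x) = d x * cnj (d x)" by (simp add: d_def left_diff_distrib)
        also have "\<dots> = complex_of_real ((norm (d x))\<^sup>2)" using complex_norm_square[of "d x"] by simp
        finally show ?thesis by (cases "x \<in> A") (simp_all add: scaleR_diff_right[symmetric])
      qed
    qed
    have "(\<integral>x. complex_of_real (indicator A x * (norm (d x))\<^sup>2) \<partial>lborel) = 0"
      using z0 unfolding e3 .
    hence "complex_of_real (\<integral>x. indicator A x * (norm (d x))\<^sup>2 \<partial>lborel) = 0"
      by (simp only: integral_complex_of_real)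
    hence z: "(\<integral>x. indicator A x * (norm (d x))\<^sup>2 \<partial>lborel) = 0" by simp
    have ir: "integrable lborel (\<lambda>x. indicator A x *\<^sub>R (norm (d x))\<^sup>2)"
      by (rule integrable_bdd_on[OF _ A Af, of _ "(B1 + B2)\<^sup>2"])
         (use db' in \<open>auto elim!: eventually_mono intro!: power_mono\<close>)
    have "AE x in lborel. indicator A x * (norm (d x))\<^sup>2 = 0"
      using integral_nonneg_eq_0_iff_AE[of lborel "\<lambda>x. indicator A x * (norm (d x))\<^sup>2"] ir z by simp
    thus ?thesis by (rule eventually_mono) (auto simp: A_def indicator_def)
  qed
  hence "AE x in lborel. \<forall>n::nat. x \<in> {0..real n} \<longrightarrow> d x = 0" by (subst AE_all_countable) blast
  thus ?thesis
  proof (rule eventually_mono)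
    fix x assume a: "\<forall>n::nat. x \<in> {0..real n} \<longrightarrow> d x = 0"
    show "0 \<le> x \<longrightarrow> h1 x = h2 x"
    proof
      assume "0 \<le> x"
      hence "x \<in> {0..real (nat \<lceil>x\<rceil>)}" by auto
      with a have "d x = 0" by blast
      thus "h1 x = h2 x" by (simp add: d_def)
    qed
  qed
qed

lemma wprop_unique:
  assumes "wprop F G h1" "wprop F G h2" "F \<noteq> bot"
  shows "AE x in lborel. 0 \<le> x \<longrightarrow> h1 x = h2 x"
proof (rule wstar_unique0)
  show "h1 \<in> Linf_on {0..}" "h2 \<in> Linf_on {0..}" using assms by (auto simp: wprop_def)
  fix \<psi> :: "real \<Rightarrow> complex" assume "set_integrable lborel {0..} \<psi>"
  show "set_lebesgue_integral lborel {0..} (\<lambda>x. h1 x * \<psi> x) = set_lebesgue_integral lborel {0..} (\<lambda>x. h2 x * \<psi> x)"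
  proof (rule tendsto_unique[OF assms(3)])
    show "((\<lambda>s. set_lebesgue_integral lborel {0..} (\<lambda>x. G s x * \<psi> x)) \<longlongrightarrow> set_lebesgue_integral lborel {0..} (\<lambda>x. h1 x * \<psi> x)) F"
      using assms(1) \<open>set_integrable lborel {0..} \<psi>\<close> by (auto simp: wprop_def)
    show "((\<lambda>s. set_lebesgue_integral lborel {0..} (\<lambda>x. G s x * \<psi> x)) \<longlongrightarrow> set_lebesgue_integral lborel {0..} (\<lambda>x. h2 x * \<psi> x)) F"
      using assms(2) \<open>set_integrable lborel {0..} \<psi>\<close> by (auto simp: wprop_def)
  qed
qed

lemma wstar_exists:
  fixes F :: "real filter" and g :: "real \<Rightarrow> complex"
  assumes F: "rult F" and F0: "eventually (\<lambda>s. 0 \<le> s) F" and g: "g \<in> Linf_on {0..}"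
  shows "\<exists>h. wprop F (\<lambda>s x. g (x + s)) h"
proof -
  have Fnb: "F \<noteq> bot" using F by (simp add: rult_def)
  have gm[measurable]: "g \<in> borel_measurable lborel" using g by (rule Linf_onD)
  obtain B0 where gb0: "AE x in lborel. x \<in> {0..} \<longrightarrow> norm (g x) \<le> B0" using Linf_onD(2)[OF g] by blast
  define B where "B = max B0 0"
  have B0: "0 \<le> B" unfolding B_def by simp
  have gb: "AE x in lborel. x \<in> {0..} \<longrightarrow> norm (g x) \<le> B"
    using gb0 by (rule eventually_mono) (auto simp: B_def)
  define Gs where "Gs s x = indicator {0..} x *\<^sub>R g (x + s)" for s x :: real
  have Gsm[measurable]: "Gs s \<in> borel_measurable lborel" for s unfolding Gs_def by measurable
  have Gsb: "AE x in lborel. norm (Gs s x) \<le> B" if "0 \<le> s" for s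
    using AE_shift[OF gb, of s]
  proof (rule eventually_mono)
    fix x assume "x + s \<in> {0..} \<longrightarrow> norm (g (x + s)) \<le> B"
    thus "norm (Gs s x) \<le> B" using that B0 by (auto simp: Gs_def indicator_def)
  qed
  define T where "T s \<psi> = (\<integral>x. Gs s x * \<psi> x \<partial>lborel)" for s and \<psi> :: "real \<Rightarrow> complex"
  have Ti: "integrable lborel (\<lambda>x. Gs s x * \<psi> x)" if "0 \<le> s" "integrable lborel \<psi>" for s \<psi>
    by (rule integrable_bdd_mult[OF Gsm Gsb[OF that(1)] that(2)])
  have Tb: "norm (T s \<psi>) \<le> B * (\<integral>x. norm (\<psi> x) \<partial>lborel)" if s: "0 \<le> s" and psi: "integrable lborel \<psi>" for s \<psi>
  proof -
    have "norm (T s \<psi>) \<le> (\<integral>x. norm (Gs s x * \<psi> x) \<partial>lborel)" unfolding T_def by (rule integral_norm_bound)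
    also have "\<dots> \<le> (\<integral>x. B * norm (\<psi> x) \<partial>lborel)"
    proof (rule integral_mono_AE)
      show "integrable lborel (\<lambda>x. norm (Gs s x * \<psi> x))" using Ti[OF s psi] by simp
      show "integrable lborel (\<lambda>x. B * norm (\<psi> x))" using psi by simp
      show "AE x in lborel. norm (Gs s x * \<psi> x) \<le> B * norm (\<psi> x)"
        using Gsb[OF s] by (rule eventually_mono) (auto simp: norm_mult intro: mult_right_mono)
    qed
    finally show ?thesis by simp
  qed
  have conv: "\<exists>l. ((\<lambda>s. T s \<psi>) \<longlongrightarrow> l) F" if psi: "integrable lborel \<psi>" for \<psi>
  proof (rule rult_lim[OF F compact_cball])
    show "eventually (\<lambda>s. T s \<psi> \<in> cball 0 (B * (\<integral>x. norm (\<psi> x) \<partial>lborel))) F"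
      using F0 by (rule eventually_mono) (use Tb psi in auto)
  qed
  define L where "L \<psi> = Lim F (\<lambda>s. T s \<psi>)" for \<psi>
  have LT: "((\<lambda>s. T s \<psi>) \<longlongrightarrow> L \<psi>) F" if psi: "integrable lborel \<psi>" for \<psi>
  proof -
    obtain l where l: "((\<lambda>s. T s \<psi>) \<longlongrightarrow> l) F" using conv[OF psi] by blast
    hence "L \<psi> = l" unfolding L_def by (rule tendsto_Lim[OF Fnb])
    thus ?thesis using l by simp
  qed
  have ladd: "L (\<lambda>x. f x + g x) = L f + L g" if "integrable lborel f" "integrable lborel g" for f g
  proof (rule tendsto_unique[OF Fnb])
    show "((\<lambda>s. T s (\<lambda>x. f x + g x)) \<longlongrightarrow> L (\<lambda>x. f x + g x)) F" using that by (intro LT) auto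
    have "((\<lambda>s. T s f + T s g) \<longlongrightarrow> L f + L g) F" using that by (intro tendsto_add LT)
    moreover have "eventually (\<lambda>s. T s f + T s g = T s (\<lambda>x. f x + g x)) F"
      using F0
    proof (rule eventually_mono)
      fix s :: real assume "0 \<le> s"
      thus "T s f + T s g = T s (\<lambda>x. f x + g x)"
        unfolding T_def using Ti[OF _ that(1)] Ti[OF _ that(2)]
        by (simp add: distrib_left Bochner_Integration.integral_add)
    qed
    ultimately show "((\<lambda>s. T s (\<lambda>x. f x + g x)) \<longlongrightarrow> L f + L g) F" by (rule Lim_transform_eventually)
  qed
  have lmult: "L (\<lambda>x. c * f x) = c * L f" if "integrable lborel f" for c f
  proof (rule tendsto_unique[OF Fnb])
    show "((\<lambda>s. T s (\<lambda>x. c * f x)) \<longlongrightarrow> L (\<lambda>x. c * f x)) F" using that by (intro LT) auto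
    have "T s (\<lambda>x. c * f x) = c * T s f" for s
    proof -
      have "(\<lambda>x. Gs s x * (c * f x)) = (\<lambda>x. c * (Gs s x * f x))" by (rule ext) (simp only: mult.left_commute)
      thus ?thesis unfolding T_def by (simp only: Bochner_Integration.integral_mult_right_zero)
    qed
    thus "((\<lambda>s. T s (\<lambda>x. c * f x)) \<longlongrightarrow> c * L f) F" using LT[OF that] by (simp add: tendsto_mult_left)
  qed
  have lbnd: "norm (L f) \<le> B * (\<integral>x. norm (f x) \<partial>lborel)" if "integrable lborel f" for f
  proof (rule tendsto_upperbound[OF tendsto_norm[OF LT[OF that]] _ Fnb])
    show "eventually (\<lambda>s. norm (T s f) \<le> B * (\<integral>x. norm (f x) \<partial>lborel)) F"
      using F0 by (rule eventually_mono) (use Tb that in auto)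
  qed
  obtain h where hm[measurable]: "h \<in> borel_measurable lborel" and hb: "\<exists>B. AE x in lborel. norm (h x) \<le> B"
    and hL: "\<And>f. integrable lborel f \<Longrightarrow> L f = (\<integral>x. h x * f x \<partial>lborel)"
    using riesz_L1[of L B, OF ladd lmult lbnd] by blast
  have "wprop F (\<lambda>s x. g (x + s)) h"
    unfolding wprop_def
  proof (intro conjI allI impI)
    show "h \<in> Linf_on {0..}" using hm hb unfolding Linf_on_def by (auto elim!: eventually_mono)
    fix \<psi> :: "real \<Rightarrow> complex" assume psi: "set_integrable lborel {0..} \<psi>"
    define \<psi>' where "\<psi>' x = indicator {0..} x *\<^sub>R \<psi> x" for x :: real
    have psi': "integrable lborel \<psi>'" using psi unfolding \<psi>'_def set_integrable_def .
    have e1: "set_lebesgue_integral lborel {0..} (\<lambda>x. g (x + s) * \<psi> x) = T s \<psi>'" for s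
      unfolding set_lebesgue_integral_def T_def Gs_def \<psi>'_def
      by (rule Bochner_Integration.integral_cong) (auto simp: indicator_def)
    have e2: "set_lebesgue_integral lborel {0..} (\<lambda>x. h x * \<psi> x) = L \<psi>'"
      unfolding set_lebesgue_integral_def hL[OF psi'] \<psi>'_def
      by (rule Bochner_Integration.integral_cong) (auto simp: indicator_def)
    show "((\<lambda>s. set_lebesgue_integral lborel {0..} (\<lambda>x. g (x + s) * \<psi> x))
           \<longlongrightarrow> set_lebesgue_integral lborel {0..} (\<lambda>x. h x * \<psi> x)) F"
      unfolding e1 e2 by (rule LT[OF psi'])
  qed
  thus ?thesis by blast
qed

lemma g_omega_pos_spec:
  assumes "\<eta> \<in> Nstar" "0 \<le> u" "g \<in> Linf_on {0..}"
  shows "wprop (omega_filter \<eta> u) (\<lambda>s x. g (x + s)) (g_omega_pos g \<eta> u)"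
proof -
  obtain h where "wprop (omega_filter \<eta> u) (\<lambda>s x. g (x + s)) h"
    using wstar_exists[OF omega_filter_rult[OF assms(1)] omega_filter_nonneg[OF assms(2)] assms(3)] by blast
  thus ?thesis unfolding g_omega_pos_def by (rule wstar_lim_spec)
qed



lemma integrable_shift:
  fixes f :: "real \<Rightarrow> 'b::{banach, second_countable_topology}"
  assumes "integrable lborel f" shows "integrable lborel (\<lambda>y. f (y + a))"
  using lborel_integrable_real_affine[OF assms, of 1 a] by (simp add: add.commute)

lemma integral_shift:
  fixes f :: "real \<Rightarrow> 'b::{banach, second_countable_topology}"
  shows "(\<integral>y. f (y + a) \<partial>lborel) = (\<integral>y. f y \<partial>lborel)"
  using lborel_integral_real_affine[of 1 f a] by (simp add: add.commute)

lemma shift_setint: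
  fixes q \<psi> :: "real \<Rightarrow> complex" and k :: real
  assumes k: "0 \<le> k"
  shows "set_lebesgue_integral lborel {0..} (\<lambda>z. q z * (indicator {k..} z *\<^sub>R \<psi> (z - k)))
       = set_lebesgue_integral lborel {0..} (\<lambda>w. q (w + k) * \<psi> w)"
proof -
  have "set_lebesgue_integral lborel {0..} (\<lambda>z. q z * (indicator {k..} z *\<^sub>R \<psi> (z - k)))
      = (\<integral>w. indicator {0..} (w + k) *\<^sub>R (q (w + k) * (indicator {k..} (w + k) *\<^sub>R \<psi> (w + k - k))) \<partial>lborel)"
    unfolding set_lebesgue_integral_def by (rule integral_shift[symmetric])
  also have "\<dots> = set_lebesgue_integral lborel {0..} (\<lambda>w. q (w + k) * \<psi> w)"
    unfolding set_lebesgue_integral_def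
    by (rule Bochner_Integration.integral_cong) (use k in \<open>auto simp: indicator_def\<close>)
  finally show ?thesis .
qed

lemma shiftK:
  assumes \<eta>1: "\<eta>1 \<in> Nstar" and \<eta>2: "\<eta>2 \<in> Nstar" and k: "(tau ^^ k) \<eta>1 = \<eta>2"
    and u: "0 \<le> u" and g: "g \<in> Linf_on {0..}"
  shows "AE w in lborel. 0 \<le> w \<longrightarrow> g_omega_pos g \<eta>1 u (real k + w) = g_omega_pos g \<eta>2 u w"
proof -
  define h1 where "h1 = g_omega_pos g \<eta>1 u"
  define F1 where "F1 = omega_filter \<eta>1 u"
  have w1: "wprop F1 (\<lambda>s x. g (x + s)) h1" unfolding h1_def F1_def by (rule g_omega_pos_spec[OF \<eta>1 u g])
  have w2: "wprop (omega_filter \<eta>2 u) (\<lambda>s x. g (x + s)) (g_omega_pos g \<eta>2 u)"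
    by (rule g_omega_pos_spec[OF \<eta>2 u g])
  have h1L: "h1 \<in> Linf_on {0..}" using w1 by (simp add: wprop_def)
  have h1m[measurable]: "h1 \<in> borel_measurable lborel" using h1L by (rule Linf_onD)
  obtain C where C: "AE x in lborel. x \<in> {0..} \<longrightarrow> norm (h1 x) \<le> C" using Linf_onD(2)[OF h1L] by blast
  define h1' where "h1' w = h1 (real k + w)" for w
  have F2: "omega_filter \<eta>2 u = filtermap (\<lambda>s. real k + s) F1"
    unfolding F1_def omega_filter_shift k ..
  have "wprop (omega_filter \<eta>2 u) (\<lambda>s x. g (x + s)) h1'"
    unfolding wprop_def
  proof (intro conjI allI impI)
    show "h1' \<in> Linf_on {0..}"
      unfolding Linf_on_def
    proof (intro CollectI conjI exI)
      show "h1' \<in> borel_measurable lborel" unfolding h1'_def by measurable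
      show "AE x in lborel. x \<in> {0..} \<longrightarrow> norm (h1' x) \<le> C"
        using AE_shift[OF C, of "real k"] by (rule eventually_mono) (auto simp: h1'_def add.commute)
    qed
    fix \<psi> :: "real \<Rightarrow> complex" assume psi: "set_integrable lborel {0..} \<psi>"
    define \<psi>' where "\<psi>' z = indicator {real k..} z *\<^sub>R \<psi> (z - real k)" for z
    have psi': "set_integrable lborel {0..} \<psi>'"
    proof -
      have "integrable lborel (\<lambda>z. indicator {0..} (z + - real k) *\<^sub>R \<psi> (z + - real k))"
        using integrable_shift[OF psi[unfolded set_integrable_def], of "- real k"] .
      moreover have "(\<lambda>z. indicator {0..} (z + - real k) *\<^sub>R \<psi> (z + - real k)) = (\<lambda>z. indicator {0..} z *\<^sub>R \<psi>' z)"
        by (rule ext) (auto simp: \<psi>'_def indicator_def)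
      ultimately show ?thesis unfolding set_integrable_def by simp
    qed
    have lim1: "((\<lambda>s. set_lebesgue_integral lborel {0..} (\<lambda>x. g (x + s) * \<psi>' x))
           \<longlongrightarrow> set_lebesgue_integral lborel {0..} (\<lambda>x. h1 x * \<psi>' x)) F1"
      using w1 psi' by (simp add: wprop_def)
    have e1: "set_lebesgue_integral lborel {0..} (\<lambda>x. g (x + s) * \<psi>' x)
        = set_lebesgue_integral lborel {0..} (\<lambda>w. g (w + (real k + s)) * \<psi> w)" for s
      unfolding \<psi>'_def using shift_setint[of "real k" "\<lambda>x. g (x + s)" \<psi>] by (simp add: ac_simps)
    have e2: "set_lebesgue_integral lborel {0..} (\<lambda>x. h1 x * \<psi>' x)
        = set_lebesgue_integral lborel {0..} (\<lambda>w. h1' w * \<psi> w)"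
      unfolding \<psi>'_def h1'_def using shift_setint[of "real k" h1 \<psi>] by (simp add: ac_simps)
    have "((\<lambda>s. set_lebesgue_integral lborel {0..} (\<lambda>w. g (w + (real k + s)) * \<psi> w))
           \<longlongrightarrow> set_lebesgue_integral lborel {0..} (\<lambda>w. h1' w * \<psi> w)) F1"
      using lim1 unfolding e1 e2 .
    thus "((\<lambda>s. set_lebesgue_integral lborel {0..} (\<lambda>x. g (x + s) * \<psi> x))
           \<longlongrightarrow> set_lebesgue_integral lborel {0..} (\<lambda>x. h1' x * \<psi> x)) (omega_filter \<eta>2 u)"
      unfolding F2 filterlim_filtermap by simp
  qed
  from wprop_unique[OF this w2] show ?thesis
    using omega_filter_rult[OF \<eta>2] by (auto simp: rult_def h1'_def h1_def)
qed

lemma prod_int: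
  fixes g \<phi>0 \<psi>0 :: "real \<Rightarrow> complex"
  assumes gm[measurable]: "g \<in> borel_measurable lborel" and gb: "\<And>y. norm (g y) \<le> C"
    and \<phi>: "integrable lborel \<phi>0" and \<psi>: "integrable lborel \<psi>0"
  shows "integrable (lborel \<Otimes>\<^sub>M lborel) (\<lambda>(x, y). \<psi>0 x * (g y * \<phi>0 (y - x)))"
    and "\<And>x. integrable lborel (\<lambda>y. \<psi>0 x * (g y * \<phi>0 (y - x)))"
proof -
  have \<phi>m[measurable]: "\<phi>0 \<in> borel_measurable lborel" using \<phi> by (rule borel_measurable_integrable)
  have \<psi>m[measurable]: "\<psi>0 \<in> borel_measurable lborel" using \<psi> by (rule borel_measurable_integrable)
  have C0: "0 \<le> C" using gb[of 0] norm_ge_zero order_trans by blast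
  have \<phi>s: "integrable lborel (\<lambda>y. \<phi>0 (y - x))" for x
    using integrable_shift[OF \<phi>, of "-x"] by simp
  show yint: "integrable lborel (\<lambda>y. \<psi>0 x * (g y * \<phi>0 (y - x)))" for x
  proof (rule Bochner_Integration.integrable_bound[of _ "\<lambda>y. complex_of_real (norm (\<psi>0 x) * C) * \<phi>0 (y - x)"])
    show "integrable lborel (\<lambda>y. complex_of_real (norm (\<psi>0 x) * C) * \<phi>0 (y - x))"
      using \<phi>s[of x] by (rule integrable_mult_right)
    show "(\<lambda>y. \<psi>0 x * (g y * \<phi>0 (y - x))) \<in> borel_measurable lborel" by measurable
    show "AE y in lborel. norm (\<psi>0 x * (g y * \<phi>0 (y - x))) \<le> norm (complex_of_real (norm (\<psi>0 x) * C) * \<phi>0 (y - x))"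
    proof (rule AE_I2)
      fix y
      have "norm (\<psi>0 x) * (norm (g y) * norm (\<phi>0 (y - x))) \<le> norm (\<psi>0 x) * (C * norm (\<phi>0 (y - x)))"
        using gb[of y] by (intro mult_left_mono mult_right_mono) auto
      thus "norm (\<psi>0 x * (g y * \<phi>0 (y - x))) \<le> norm (complex_of_real (norm (\<psi>0 x) * C) * \<phi>0 (y - x))"
        using C0 by (simp add: norm_mult abs_mult)
    qed
  qed
  show "integrable (lborel \<Otimes>\<^sub>M lborel) (\<lambda>(x, y). \<psi>0 x * (g y * \<phi>0 (y - x)))"
  proof (rule lborel_pair.Fubini_integrable)
    show "(\<lambda>(x, y). \<psi>0 x * (g y * \<phi>0 (y - x))) \<in> borel_measurable (lborel \<Otimes>\<^sub>M lborel)" by measurable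
    show "AE x in lborel. integrable lborel (\<lambda>y. case (x, y) of (x, y) \<Rightarrow> \<psi>0 x * (g y * \<phi>0 (y - x)))"
      using yint by simp
    show "integrable lborel (\<lambda>x. \<integral>y. norm (case (x, y) of (x, y) \<Rightarrow> \<psi>0 x * (g y * \<phi>0 (y - x))) \<partial>lborel)"
    proof (rule Bochner_Integration.integrable_bound[of _ "\<lambda>x. (C * (\<integral>y. norm (\<phi>0 y) \<partial>lborel)) * norm (\<psi>0 x)"])
      show "integrable lborel (\<lambda>x. (C * (\<integral>y. norm (\<phi>0 y) \<partial>lborel)) * norm (\<psi>0 x))"
        using \<psi> by simp
      show "(\<lambda>x. \<integral>y. norm (case (x, y) of (x, y) \<Rightarrow> \<psi>0 x * (g y * \<phi>0 (y - x))) \<partial>lborel) \<in> borel_measurable lborel"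
        by measurable
      show "AE x in lborel. norm (\<integral>y. norm (case (x, y) of (x, y) \<Rightarrow> \<psi>0 x * (g y * \<phi>0 (y - x))) \<partial>lborel)
          \<le> norm ((C * (\<integral>y. norm (\<phi>0 y) \<partial>lborel)) * norm (\<psi>0 x))"
      proof (rule AE_I2)
        fix x
        have "(\<integral>y. norm (\<psi>0 x * (g y * \<phi>0 (y - x))) \<partial>lborel) \<le> (\<integral>y. norm (\<psi>0 x) * C * norm (\<phi>0 (y - x)) \<partial>lborel)"
        proof (rule integral_mono)
          show "integrable lborel (\<lambda>y. norm (\<psi>0 x * (g y * \<phi>0 (y - x))))" using yint[of x] by simp
          show "integrable lborel (\<lambda>y. norm (\<psi>0 x) * C * norm (\<phi>0 (y - x)))" using \<phi>s[of x] by simp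
          fix y
          have "norm (\<psi>0 x) * (norm (g y) * norm (\<phi>0 (y - x))) \<le> norm (\<psi>0 x) * (C * norm (\<phi>0 (y - x)))"
            using gb[of y] by (intro mult_left_mono mult_right_mono) auto
          thus "norm (\<psi>0 x * (g y * \<phi>0 (y - x))) \<le> norm (\<psi>0 x) * C * norm (\<phi>0 (y - x))"
            by (simp add: norm_mult mult.assoc)
        qed
        also have "\<dots> = norm (\<psi>0 x) * C * (\<integral>y. norm (\<phi>0 (y - x)) \<partial>lborel)"
          by (rule Bochner_Integration.integral_mult_right_zero)
        also have "(\<integral>y. norm (\<phi>0 (y - x)) \<partial>lborel) = (\<integral>y. norm (\<phi>0 y) \<partial>lborel)"
          using integral_shift[of "\<lambda>y. norm (\<phi>0 y)" "-x"] by simp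
        finally have le: "(\<integral>y. norm (\<psi>0 x * (g y * \<phi>0 (y - x))) \<partial>lborel) \<le> norm (\<psi>0 x) * C * (\<integral>y. norm (\<phi>0 y) \<partial>lborel)" .
        have nn: "0 \<le> (\<integral>y. norm (\<psi>0 x * (g y * \<phi>0 (y - x))) \<partial>lborel)" by (rule Bochner_Integration.integral_nonneg) auto
        have nn2: "0 \<le> (\<integral>y. norm (\<phi>0 y) \<partial>lborel)" by (rule Bochner_Integration.integral_nonneg) auto
        show "norm (\<integral>y. norm (case (x, y) of (x, y) \<Rightarrow> \<psi>0 x * (g y * \<phi>0 (y - x))) \<partial>lborel)
          \<le> norm ((C * (\<integral>y. norm (\<phi>0 y) \<partial>lborel)) * norm (\<psi>0 x))"
          using le nn nn2 C0 by (simp add: abs_mult ac_simps)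
      qed
    qed
  qed
qed

lemma fubini_core:
  fixes g \<phi>0 \<psi>0 :: "real \<Rightarrow> complex"
  assumes gm[measurable]: "g \<in> borel_measurable lborel" and gb: "\<And>y. norm (g y) \<le> C"
    and \<phi>: "integrable lborel \<phi>0" and \<psi>: "integrable lborel \<psi>0"
  shows "(\<integral>x. \<psi>0 x * (\<integral>t. g (x + t) * \<phi>0 t \<partial>lborel) \<partial>lborel)
       = (\<integral>y. g y * (\<integral>x. \<psi>0 x * \<phi>0 (y - x) \<partial>lborel) \<partial>lborel)"
proof -
  have inner: "(\<integral>t. g (x + t) * \<phi>0 t \<partial>lborel) = (\<integral>y. g y * \<phi>0 (y - x) \<partial>lborel)" for x
    using integral_shift[of "\<lambda>t. g (x + t) * \<phi>0 t" "-x"] by simp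
  have "(\<integral>x. \<psi>0 x * (\<integral>t. g (x + t) * \<phi>0 t \<partial>lborel) \<partial>lborel)
      = (\<integral>x. (\<integral>y. \<psi>0 x * (g y * \<phi>0 (y - x)) \<partial>lborel) \<partial>lborel)"
    unfolding inner by (simp only: Bochner_Integration.integral_mult_right_zero)
  also have "\<dots> = (\<integral>y. (\<integral>x. \<psi>0 x * (g y * \<phi>0 (y - x)) \<partial>lborel) \<partial>lborel)"
    by (rule lborel_pair.Fubini_integral[symmetric]) (rule prod_int[OF gm gb \<phi> \<psi>])
  also have "\<dots> = (\<integral>y. g y * (\<integral>x. \<psi>0 x * \<phi>0 (y - x) \<partial>lborel) \<partial>lborel)"
  proof -
    have "(\<lambda>x. \<psi>0 x * (g y * \<phi>0 (y - x))) = (\<lambda>x. g y * (\<psi>0 x * \<phi>0 (y - x)))" for y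
      by (rule ext) (simp only: mult.left_commute)
    thus ?thesis by (simp only: Bochner_Integration.integral_mult_right_zero)
  qed
  finally show ?thesis .
qed

lemma conv_integrable:
  fixes \<phi>0 \<psi>0 :: "real \<Rightarrow> complex"
  assumes \<phi>: "integrable lborel \<phi>0" and \<psi>: "integrable lborel \<psi>0"
  shows "integrable lborel (\<lambda>y. \<integral>x. \<psi>0 x * \<phi>0 (y - x) \<partial>lborel)"
proof -
  have "integrable (lborel \<Otimes>\<^sub>M lborel) (\<lambda>(x, y). \<psi>0 x * ((\<lambda>_. 1::complex) y * \<phi>0 (y - x)))"
    by (rule prod_int(1)[where C=1]) (use \<phi> \<psi> in auto)
  from lborel_pair.integrable_snd[of "\<lambda>x y. \<psi>0 x * ((\<lambda>_. 1::complex) y * \<phi>0 (y - x))", OF this] show ?thesis by simp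
qed

lemma fubini_conv:
  fixes g \<phi>0 \<psi>0 :: "real \<Rightarrow> complex"
  assumes gm[measurable]: "g \<in> borel_measurable lborel" and gb: "AE y in lborel. 0 \<le> y \<longrightarrow> norm (g y) \<le> C"
    and \<phi>: "integrable lborel \<phi>0" and \<phi>0: "\<And>t. t < 0 \<Longrightarrow> \<phi>0 t = 0"
    and \<psi>: "integrable lborel \<psi>0" and \<psi>0: "\<And>x. x < 0 \<Longrightarrow> \<psi>0 x = 0"
  shows "(\<integral>x. \<psi>0 x * (\<integral>t. g (x + t) * \<phi>0 t \<partial>lborel) \<partial>lborel)
       = (\<integral>y. g y * (\<integral>x. \<psi>0 x * \<phi>0 (y - x) \<partial>lborel) \<partial>lborel)"
proof -
  have \<phi>m[measurable]: "\<phi>0 \<in> borel_measurable lborel" using \<phi> by (rule borel_measurable_integrable)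
  have \<psi>m[measurable]: "\<psi>0 \<in> borel_measurable lborel" using \<psi> by (rule borel_measurable_integrable)
  define C' where "C' = max C 0"
  define g' where "g' y = (if norm (g y) \<le> C' then g y else 0)" for y
  have g'm[measurable]: "g' \<in> borel_measurable lborel" unfolding g'_def by measurable
  have g'b: "norm (g' y) \<le> C'" for y unfolding g'_def C'_def by auto
  have geq: "AE y in lborel. 0 \<le> y \<longrightarrow> g' y = g y"
    using gb by (rule eventually_mono) (auto simp: g'_def C'_def)
  have L: "(\<integral>x. \<psi>0 x * (\<integral>t. g (x + t) * \<phi>0 t \<partial>lborel) \<partial>lborel)
      = (\<integral>x. \<psi>0 x * (\<integral>t. g' (x + t) * \<phi>0 t \<partial>lborel) \<partial>lborel)"
  proof (rule Bochner_Integration.integral_cong[OF refl])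
    fix x :: real
    show "\<psi>0 x * (\<integral>t. g (x + t) * \<phi>0 t \<partial>lborel) = \<psi>0 x * (\<integral>t. g' (x + t) * \<phi>0 t \<partial>lborel)"
    proof (cases "x < 0")
      case True thus ?thesis using \<psi>0 by simp
    next
      case False
      have "(\<integral>t. g (x + t) * \<phi>0 t \<partial>lborel) = (\<integral>t. g' (x + t) * \<phi>0 t \<partial>lborel)"
      proof (rule integral_cong_AE)
        show "AE t in lborel. g (x + t) * \<phi>0 t = g' (x + t) * \<phi>0 t"
          using AE_shift[OF geq, of x]
        proof (rule eventually_mono)
          fix t assume a: "0 \<le> t + x \<longrightarrow> g' (t + x) = g (t + x)"
          show "g (x + t) * \<phi>0 t = g' (x + t) * \<phi>0 t"
          proof (cases "t < 0")
            case True thus ?thesis using \<phi>0 by simp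
          next
            case False thus ?thesis using a \<open>\<not> x < 0\<close> by (simp add: add.commute)
          qed
        qed
      qed measurable
      thus ?thesis by simp
    qed
  qed
  define K where "K y = (\<integral>x. \<psi>0 x * \<phi>0 (y - x) \<partial>lborel)" for y
  have Km[measurable]: "K \<in> borel_measurable lborel" unfolding K_def by measurable
  have K0: "K y = 0" if "y < 0" for y
  proof -
    have "\<psi>0 x * \<phi>0 (y - x) = 0" for x
      using \<psi>0[of x] \<phi>0[of "y - x"] that by (cases "x < 0") auto
    hence "(\<lambda>x. \<psi>0 x * \<phi>0 (y - x)) = (\<lambda>x. 0)" by (rule ext)
    thus ?thesis unfolding K_def by simp
  qed
  have R: "(\<integral>y. g y * K y \<partial>lborel) = (\<integral>y. g' y * K y \<partial>lborel)"
  proof (rule integral_cong_AE)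
    show "AE y in lborel. g y * K y = g' y * K y"
      using geq by (rule eventually_mono) (use K0 in \<open>auto simp: not_le[symmetric]\<close>)
  qed measurable
  show ?thesis
    unfolding L K_def[symmetric] R unfolding K_def
    by (rule fubini_core[OF g'm g'b \<phi> \<psi>])
qed



lemma phi_tilde_eq: "phi_tilde \<phi> = (\<lambda>t. indicator {0..} t *\<^sub>R \<phi> t)"
  by (rule ext) (auto simp: phi_tilde_def indicator_def)

lemma phi_tilde_int: "set_integrable lborel {0..} \<phi> \<Longrightarrow> integrable lborel (phi_tilde \<phi>)"
  unfolding phi_tilde_eq set_integrable_def .

lemma Ustar_eq: "Ustar \<phi> f z = (\<integral>t. f (z + t) * phi_tilde \<phi> t \<partial>lborel)"
proof -
  have "Ustar \<phi> f z = (\<integral>t. indicator {z..} (t + z) *\<^sub>R (f (t + z) * \<phi> (t + z - z)) \<partial>lborel)"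
    unfolding Ustar_def set_lebesgue_integral_def by (rule integral_shift[symmetric])
  also have "\<dots> = (\<integral>t. f (z + t) * phi_tilde \<phi> t \<partial>lborel)"
    by (rule Bochner_Integration.integral_cong) (auto simp: indicator_def phi_tilde_def add.commute)
  finally show ?thesis .
qed

lemma g_omega_pos_meas:
  assumes "\<eta> \<in> Nstar" "0 \<le> u" "g \<in> Linf_on {0..}"
  shows "g_omega_pos g \<eta> u \<in> borel_measurable lborel"
  using g_omega_pos_spec[OF assms] by (auto simp: wprop_def Linf_on_def)

lemma g_omega_meas:
  assumes \<eta>: "\<eta> \<in> Nstar" and u: "0 \<le> u" and g: "g \<in> Linf_on {0..}"
  shows "g_omega g \<eta> u \<in> borel_measurable lborel"
proof -
  have H: "(\<lambda>x. g_omega_pos g (tau_inv n \<eta>) u (real n + x)) \<in> borel_measurable lborel" for n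
  proof -
    have [measurable]: "g_omega_pos g (tau_inv n \<eta>) u \<in> borel_measurable lborel"
      by (rule g_omega_pos_meas[OF tau_inv_props(1)[OF \<eta>] u g])
    show ?thesis by measurable
  qed
  have nm: "(\<lambda>x::real. nat \<lceil>- x\<rceil>) \<in> measurable lborel (count_space UNIV)" by measurable
  have c: "(\<lambda>x. (\<lambda>n x. g_omega_pos g (tau_inv n \<eta>) u (real n + x)) (nat \<lceil>- x\<rceil>) x) \<in> borel_measurable lborel"
    by (rule measurable_compose_countable'[OF H nm]) auto
  have p[measurable]: "g_omega_pos g \<eta> u \<in> borel_measurable lborel" by (rule g_omega_pos_meas[OF \<eta> u g])
  have e: "g_omega g \<eta> u = (\<lambda>x. if 0 \<le> x then g_omega_pos g \<eta> u x
      else (\<lambda>n x. g_omega_pos g (tau_inv n \<eta>) u (real n + x)) (nat \<lceil>- x\<rceil>) x)"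
    by (rule ext) (simp add: g_omega_def Let_def)
  show ?thesis unfolding e by (intro measurable_If c p) auto
qed

lemma partB:
  assumes \<eta>: "\<eta> \<in> Nstar" and u: "0 \<le> u" and \<phi>: "set_integrable lborel {0..} \<phi>" and f: "f \<in> Linf_on {0..}"
  shows "AE x in lborel. 0 \<le> x \<longrightarrow>
      g_omega_pos (Ustar \<phi> f) \<eta> u x = (\<integral>t. g_omega f \<eta> u (x + t) * phi_tilde \<phi> t \<partial>lborel)"
proof -
  define F where "F = omega_filter \<eta> u"
  define fw where "fw = g_omega_pos f \<eta> u"
  have wf: "wprop F (\<lambda>s x. f (x + s)) fw" unfolding F_def fw_def by (rule g_omega_pos_spec[OF \<eta> u f])
  have Fnb: "F \<noteq> bot" using omega_filter_rult[OF \<eta>] by (simp add: F_def rult_def)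
  have F0: "eventually (\<lambda>s. 0 \<le> s) F" unfolding F_def by (rule omega_filter_nonneg[OF u])
  have fwL: "fw \<in> Linf_on {0..}" using wf by (simp add: wprop_def)
  have fwm[measurable]: "fw \<in> borel_measurable lborel" using fwL by (rule Linf_onD)
  obtain Cw where Cw: "AE x in lborel. x \<in> {0..} \<longrightarrow> norm (fw x) \<le> Cw" using Linf_onD(2)[OF fwL] by blast
  have fm[measurable]: "f \<in> borel_measurable lborel" using f by (rule Linf_onD)
  obtain Cf where Cf: "AE x in lborel. x \<in> {0..} \<longrightarrow> norm (f x) \<le> Cf" using Linf_onD(2)[OF f] by blast
  define \<phi>0 where "\<phi>0 = phi_tilde \<phi>"
  have \<phi>0i: "integrable lborel \<phi>0" unfolding \<phi>0_def by (rule phi_tilde_int[OF \<phi>])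
  have \<phi>0m[measurable]: "\<phi>0 \<in> borel_measurable lborel" using \<phi>0i by (rule borel_measurable_integrable)
  have \<phi>00: "\<phi>0 t = 0" if "t < 0" for t using that by (simp add: \<phi>0_def phi_tilde_def)
  define hU where "hU x = (\<integral>t. fw (x + t) * \<phi>0 t \<partial>lborel)" for x
  have hUm[measurable]: "hU \<in> borel_measurable lborel" unfolding hU_def by measurable
  define Cw' where "Cw' = max Cw 0"
  have hUb: "norm (hU x) \<le> Cw' * (\<integral>t. norm (\<phi>0 t) \<partial>lborel)" if x: "0 \<le> x" for x
  proof -
    have ae: "AE t in lborel. norm (fw (x + t) * \<phi>0 t) \<le> norm (complex_of_real Cw' * \<phi>0 t)"
      using AE_shift[OF Cw, of x]
    proof (rule eventually_mono)
      fix t assume a: "t + x \<in> {0..} \<longrightarrow> norm (fw (t + x)) \<le> Cw"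
      show "norm (fw (x + t) * \<phi>0 t) \<le> norm (complex_of_real Cw' * \<phi>0 t)"
      proof (cases "t < 0")
        case True thus ?thesis using \<phi>00 by simp
      next
        case False
        hence "norm (fw (x + t)) \<le> Cw'" using a x by (auto simp: Cw'_def add.commute)
        thus ?thesis unfolding norm_mult by (auto simp: Cw'_def intro: mult_right_mono)
      qed
    qed
    have int: "integrable lborel (\<lambda>t. fw (x + t) * \<phi>0 t)"
      by (rule Bochner_Integration.integrable_bound[OF _ _ ae]) (use \<phi>0i in auto)
    have "norm (hU x) \<le> (\<integral>t. norm (fw (x + t) * \<phi>0 t) \<partial>lborel)" unfolding hU_def by (rule integral_norm_bound)
    also have "\<dots> \<le> (\<integral>t. norm (complex_of_real Cw' * \<phi>0 t) \<partial>lborel)"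
      by (rule integral_mono_AE) (use int \<phi>0i ae in auto)
    also have "\<dots> = Cw' * (\<integral>t. norm (\<phi>0 t) \<partial>lborel)" by (simp add: norm_mult Cw'_def)
    finally show ?thesis .
  qed
  have wU: "wprop F (\<lambda>s x. Ustar \<phi> f (x + s)) hU"
    unfolding wprop_def
  proof (intro conjI allI impI)
    show "hU \<in> Linf_on {0..}" unfolding Linf_on_def using hUb by (auto intro!: AE_I2)
    fix \<psi> :: "real \<Rightarrow> complex" assume psi: "set_integrable lborel {0..} \<psi>"
    define \<psi>0 where "\<psi>0 x = indicator {0..} x *\<^sub>R \<psi> x" for x
    have \<psi>0i: "integrable lborel \<psi>0" using psi unfolding \<psi>0_def set_integrable_def .
    have \<psi>00: "\<psi>0 x = 0" if "x < 0" for x using that by (simp add: \<psi>0_def)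
    define K where "K y = (\<integral>x. \<psi>0 x * \<phi>0 (y - x) \<partial>lborel)" for y
    have Ki: "integrable lborel K" unfolding K_def by (rule conv_integrable[OF \<phi>0i \<psi>0i])
    have K0: "K y = 0" if "y < 0" for y
    proof -
      have "\<psi>0 x * \<phi>0 (y - x) = 0" for x
        using \<psi>00[of x] \<phi>00[of "y - x"] that by (cases "x < 0") auto
      hence "(\<lambda>x. \<psi>0 x * \<phi>0 (y - x)) = (\<lambda>x. 0)" by (rule ext)
      thus ?thesis unfolding K_def by simp
    qed
    have Kind: "(\<lambda>y. indicator {0..} y *\<^sub>R K y) = K"
      by (rule ext) (auto simp: indicator_def K0)
    have Ks: "set_integrable lborel {0..} K" unfolding set_integrable_def Kind by (rule Ki)
    have cvt: "set_lebesgue_integral lborel {0..} (\<lambda>y. g y * K y) = (\<integral>y. g y * K y \<partial>lborel)" for g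
      unfolding set_lebesgue_integral_def
      by (rule Bochner_Integration.integral_cong) (auto simp: indicator_def K0)
    have e1: "set_lebesgue_integral lborel {0..} (\<lambda>x. Ustar \<phi> f (x + s) * \<psi> x)
        = set_lebesgue_integral lborel {0..} (\<lambda>y. f (y + s) * K y)" if s: "0 \<le> s" for s
    proof -
      have "set_lebesgue_integral lborel {0..} (\<lambda>x. Ustar \<phi> f (x + s) * \<psi> x)
          = (\<integral>x. \<psi>0 x * (\<integral>t. f (x + t + s) * \<phi>0 t \<partial>lborel) \<partial>lborel)"
        unfolding set_lebesgue_integral_def Ustar_eq \<psi>0_def \<phi>0_def
        by (rule Bochner_Integration.integral_cong) (auto simp: indicator_def ac_simps)
      also have "\<dots> = (\<integral>y. f (y + s) * K y \<partial>lborel)"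
        unfolding K_def
      proof (rule fubini_conv[where g="\<lambda>y. f (y + s)" and C=Cf, OF _ _ \<phi>0i \<phi>00 \<psi>0i \<psi>00])
        show "(\<lambda>y. f (y + s)) \<in> borel_measurable lborel" by measurable
        show "AE y in lborel. 0 \<le> y \<longrightarrow> norm (f (y + s)) \<le> Cf"
          using AE_shift[OF Cf, of s] by (rule eventually_mono) (use s in auto)
      qed
      finally show ?thesis unfolding cvt .
    qed
    have e2: "set_lebesgue_integral lborel {0..} (\<lambda>x. hU x * \<psi> x)
        = set_lebesgue_integral lborel {0..} (\<lambda>y. fw y * K y)"
    proof -
      have "set_lebesgue_integral lborel {0..} (\<lambda>x. hU x * \<psi> x)
          = (\<integral>x. \<psi>0 x * (\<integral>t. fw (x + t) * \<phi>0 t \<partial>lborel) \<partial>lborel)"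
        unfolding set_lebesgue_integral_def hU_def \<psi>0_def
        by (rule Bochner_Integration.integral_cong) (auto simp: indicator_def ac_simps)
      also have "\<dots> = (\<integral>y. fw y * K y \<partial>lborel)"
        unfolding K_def
        by (rule fubini_conv[where C=Cw, OF fwm _ \<phi>0i \<phi>00 \<psi>0i \<psi>00]) (use Cw in auto)
      finally show ?thesis unfolding cvt .
    qed
    have lim: "((\<lambda>s. set_lebesgue_integral lborel {0..} (\<lambda>y. f (y + s) * K y))
        \<longlongrightarrow> set_lebesgue_integral lborel {0..} (\<lambda>y. fw y * K y)) F"
      using wf Ks by (simp add: wprop_def)
    show "((\<lambda>s. set_lebesgue_integral lborel {0..} (\<lambda>x. Ustar \<phi> f (x + s) * \<psi> x))
        \<longlongrightarrow> set_lebesgue_integral lborel {0..} (\<lambda>x. hU x * \<psi> x)) F"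
      unfolding e2
    proof (rule Lim_transform_eventually[OF lim])
      show "eventually (\<lambda>s. set_lebesgue_integral lborel {0..} (\<lambda>y. f (y + s) * K y)
          = set_lebesgue_integral lborel {0..} (\<lambda>x. Ustar \<phi> f (x + s) * \<psi> x)) F"
        using F0 by (rule eventually_mono) (simp add: e1)
    qed
  qed
  have wG: "wprop F (\<lambda>s x. Ustar \<phi> f (x + s)) (g_omega_pos (Ustar \<phi> f) \<eta> u)"
    unfolding g_omega_pos_def F_def[symmetric] by (rule wstar_lim_spec[OF wU])
  have ae: "AE x in lborel. 0 \<le> x \<longrightarrow> g_omega_pos (Ustar \<phi> f) \<eta> u x = hU x"
    by (rule wprop_unique[OF wG wU Fnb])
  show ?thesis
    using ae
  proof (rule eventually_mono)
    fix x assume a: "0 \<le> x \<longrightarrow> g_omega_pos (Ustar \<phi> f) \<eta> u x = hU x"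
    show "0 \<le> x \<longrightarrow> g_omega_pos (Ustar \<phi> f) \<eta> u x = (\<integral>t. g_omega f \<eta> u (x + t) * phi_tilde \<phi> t \<partial>lborel)"
    proof
      assume x: "0 \<le> x"
      have "hU x = (\<integral>t. g_omega f \<eta> u (x + t) * phi_tilde \<phi> t \<partial>lborel)"
        unfolding hU_def \<phi>0_def fw_def
        by (rule Bochner_Integration.integral_cong) (use x in \<open>auto simp: g_omega_def phi_tilde_def\<close>)
      thus "g_omega_pos (Ustar \<phi> f) \<eta> u x = (\<integral>t. g_omega f \<eta> u (x + t) * phi_tilde \<phi> t \<partial>lborel)"
        using a x by simp
    qed
  qed
qed

lemma tau_inv_0: "\<eta> \<in> Nstar \<Longrightarrow> tau_inv 0 \<eta> = \<eta>"
  using tau_inv_props(2)[of \<eta> 0] by simp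

lemma g_omega_shift:
  assumes \<eta>: "\<eta> \<in> Nstar" and u: "0 \<le> u" and f: "f \<in> Linf_on {0..}"
  shows "AE z in lborel. - real N \<le> z \<longrightarrow> g_omega f (tau_inv N \<eta>) u (real N + z) = g_omega f \<eta> u z"
proof -
  define \<eta>N where "\<eta>N = tau_inv N \<eta>"
  have \<eta>N: "\<eta>N \<in> Nstar" unfolding \<eta>N_def by (rule tau_inv_props(1)[OF \<eta>])
  have sM: "AE z in lborel. M \<le> N \<longrightarrow> 0 \<le> z + real M \<longrightarrow>
      g_omega_pos f \<eta>N u (real (N - M) + (z + real M)) = g_omega_pos f (tau_inv M \<eta>) u (z + real M)" for M
  proof (cases "M \<le> N")
    case True
    have "AE w in lborel. 0 \<le> w \<longrightarrow> g_omega_pos f \<eta>N u (real (N - M) + w) = g_omega_pos f (tau_inv M \<eta>) u w"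
      by (rule shiftK[OF \<eta>N tau_inv_props(1)[OF \<eta>] _ u f]) (use tau_inv_rel[OF \<eta> True] in \<open>simp add: \<eta>N_def\<close>)
    from AE_shift[OF this, of "real M"] show ?thesis by (rule eventually_mono) blast
  qed simp
  hence "AE z in lborel. \<forall>M. M \<le> N \<longrightarrow> 0 \<le> z + real M \<longrightarrow>
      g_omega_pos f \<eta>N u (real (N - M) + (z + real M)) = g_omega_pos f (tau_inv M \<eta>) u (z + real M)"
    by (subst AE_all_countable) blast
  thus ?thesis
  proof (rule eventually_mono)
    fix z assume a: "\<forall>M. M \<le> N \<longrightarrow> 0 \<le> z + real M \<longrightarrow>
      g_omega_pos f \<eta>N u (real (N - M) + (z + real M)) = g_omega_pos f (tau_inv M \<eta>) u (z + real M)"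
    show "- real N \<le> z \<longrightarrow> g_omega f (tau_inv N \<eta>) u (real N + z) = g_omega f \<eta> u z"
    proof
      assume z: "- real N \<le> z"
      have l: "g_omega f (tau_inv N \<eta>) u (real N + z) = g_omega_pos f \<eta>N u (real N + z)"
        using z by (simp add: g_omega_def \<eta>N_def)
      show "g_omega f (tau_inv N \<eta>) u (real N + z) = g_omega f \<eta> u z"
      proof (cases "0 \<le> z")
        case True
        have "g_omega_pos f \<eta>N u (real N + z) = g_omega_pos f \<eta> u z"
          using a[rule_format, of 0] True by (simp add: tau_inv_0[OF \<eta>])
        thus ?thesis using True l by (simp add: g_omega_def)
      next
        case False
        define M where "M = nat \<lceil>- z\<rceil>"
        have MN: "M \<le> N" unfolding M_def using z by linarith
        have M0: "0 \<le> z + real M" unfolding M_def using False by linarith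
        have "g_omega_pos f \<eta>N u (real (N - M) + (z + real M)) = g_omega_pos f (tau_inv M \<eta>) u (z + real M)"
          by (rule a[rule_format, OF MN M0])
        moreover have "real (N - M) + (z + real M) = real N + z" using MN by (simp add: of_nat_diff)
        moreover have "g_omega f \<eta> u z = g_omega_pos f (tau_inv M \<eta>) u (z + real M)"
          using False by (simp add: g_omega_def M_def Let_def add.commute)
        ultimately show ?thesis using l by simp
      qed
    qed
  qed
qed

theorem theorem4p1:
  fixes \<phi> f :: "real \<Rightarrow> complex" and \<eta> :: "nat filter" and u :: real
  assumes "set_integrable lborel {0..} \<phi>"
    and "f \<in> Linf_on {0..}"
    and "\<eta> \<in> Nstar" and "u \<in> {0..1}"
  shows "(AE x in lborel.
            g_omega (Ustar \<phi> f) \<eta> u x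
              = integral\<^sup>L lborel (\<lambda>t. g_omega f \<eta> u (x + t) * phi_tilde \<phi> t))
       \<and> (\<forall>x. integral\<^sup>L lborel (\<lambda>t. g_omega f \<eta> u (x + t) * phi_tilde \<phi> t)
              = conv (g_omega f \<eta> u) (phi_star \<phi>) x)"
proof
  show "\<forall>x. integral\<^sup>L lborel (\<lambda>t. g_omega f \<eta> u (x + t) * phi_tilde \<phi> t)
              = conv (g_omega f \<eta> u) (phi_star \<phi>) x" by (simp add: conj2)
  have \<phi>: "set_integrable lborel {0..} \<phi>" and f: "f \<in> Linf_on {0..}" and \<eta>: "\<eta> \<in> Nstar"
    and u: "0 \<le> u" using assms by auto
  have \<phi>m[measurable]: "phi_tilde \<phi> \<in> borel_measurable lborel"
    using phi_tilde_int[OF \<phi>] by (rule borel_measurable_integrable)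
  have PB: "AE y in lborel. 0 \<le> y \<longrightarrow> g_omega_pos (Ustar \<phi> f) (tau_inv N \<eta>) u y
      = (\<integral>t. g_omega f (tau_inv N \<eta>) u (y + t) * phi_tilde \<phi> t \<partial>lborel)" for N
    by (rule partB[OF tau_inv_props(1)[OF \<eta>] u \<phi> f])
  have "AE x in lborel. 0 \<le> x + real N \<longrightarrow> g_omega_pos (Ustar \<phi> f) (tau_inv N \<eta>) u (x + real N)
      = (\<integral>t. g_omega f (tau_inv N \<eta>) u (x + real N + t) * phi_tilde \<phi> t \<partial>lborel)" for N
    by (rule AE_shift[OF PB])
  hence A1: "AE x in lborel. \<forall>N. 0 \<le> x + real N \<longrightarrow> g_omega_pos (Ustar \<phi> f) (tau_inv N \<eta>) u (x + real N)
      = (\<integral>t. g_omega f (tau_inv N \<eta>) u (x + real N + t) * phi_tilde \<phi> t \<partial>lborel)"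
    by (subst AE_all_countable) blast
  have A0: "AE x in lborel. 0 \<le> x \<longrightarrow> g_omega_pos (Ustar \<phi> f) \<eta> u x
      = (\<integral>t. g_omega f \<eta> u (x + t) * phi_tilde \<phi> t \<partial>lborel)"
    by (rule partB[OF \<eta> u \<phi> f])
  show "AE x in lborel. g_omega (Ustar \<phi> f) \<eta> u x
              = integral\<^sup>L lborel (\<lambda>t. g_omega f \<eta> u (x + t) * phi_tilde \<phi> t)"
    using A0 A1
  proof eventually_elim
    case (elim x)
    show ?case
    proof (cases "0 \<le> x")
      case True thus ?thesis using elim(1) by (simp add: g_omega_def)
    next
      case False
      define N where "N = nat \<lceil>- x\<rceil>"
      have N0: "0 \<le> x + real N" unfolding N_def using False by linarith
      have l: "g_omega (Ustar \<phi> f) \<eta> u x = g_omega_pos (Ustar \<phi> f) (tau_inv N \<eta>) u (x + real N)"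
        using False by (simp add: g_omega_def N_def Let_def add.commute)
      also have "\<dots> = (\<integral>t. g_omega f (tau_inv N \<eta>) u (x + real N + t) * phi_tilde \<phi> t \<partial>lborel)"
        using elim(2) N0 by blast
      also have "\<dots> = (\<integral>t. g_omega f \<eta> u (x + t) * phi_tilde \<phi> t \<partial>lborel)"
      proof (rule integral_cong_AE)
        have [measurable]: "g_omega f (tau_inv N \<eta>) u \<in> borel_measurable lborel"
          by (rule g_omega_meas[OF tau_inv_props(1)[OF \<eta>] u f])
        have [measurable]: "g_omega f \<eta> u \<in> borel_measurable lborel"
          by (rule g_omega_meas[OF \<eta> u f])
        show "(\<lambda>t. g_omega f (tau_inv N \<eta>) u (x + real N + t) * phi_tilde \<phi> t) \<in> borel_measurable lborel"
          by measurable
        show "(\<lambda>t. g_omega f \<eta> u (x + t) * phi_tilde \<phi> t) \<in> borel_measurable lborel"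
          by measurable
        show "AE t in lborel. g_omega f (tau_inv N \<eta>) u (x + real N + t) * phi_tilde \<phi> t
            = g_omega f \<eta> u (x + t) * phi_tilde \<phi> t"
          using AE_shift[OF g_omega_shift[OF \<eta> u f, of N], of x]
        proof (rule eventually_mono)
          fix t assume a: "- real N \<le> t + x \<longrightarrow> g_omega f (tau_inv N \<eta>) u (real N + (t + x)) = g_omega f \<eta> u (t + x)"
          show "g_omega f (tau_inv N \<eta>) u (x + real N + t) * phi_tilde \<phi> t = g_omega f \<eta> u (x + t) * phi_tilde \<phi> t"
          proof (cases "t < 0")
            case True thus ?thesis by (simp add: phi_tilde_def)
          next
            case False
            hence "- real N \<le> t + x" using N0 by linarith
            with a have "g_omega f (tau_inv N \<eta>) u (real N + (t + x)) = g_omega f \<eta> u (t + x)" by blast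
            thus ?thesis by (simp add: ac_simps)
          qed
        qed
      qed
      finally show ?thesis .
    qed
  qed
qed


end
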